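(* In the pay-to-bid game with risk-neutral players ($u(x)=x$), in the unique symmetric subgame perfect equilibrium, in every round $t$: (1) with re-entry, each player plays Bid with the stationary probability $1-\left(\frac{c}{v-s}\right)^{1/(n-1)}$; (2) without re-entry, each active player plays Bid with probability $1-\left(\frac{c}{v-s}\right)^{1/(n_t-1)}$, where $n_t$ is the number of active players in round $t$.
   Context: Pay-to-bid game: an object has monetary value $v>0$ that is common knowledge; there are $n\ge 2$ players; the bid fee is $c>0$ and the fixed sale price is $s\ge 0$, with $c<v-s$. Play proceeds in rounds $t=1,2,3,\dots$ with complete information. In each round every active player simultaneously chooses an action in $\{\text{Bid},\text{No Bid}\}$. Each Bid costs $c$, paid immediately to the seller. If exactly one active player bids in a round, she wins the object (value $v$), pays $s$, and the game ends; if two or more bid, play continues; if none bids, the round is replayed. With re-entry, all $n$ players are active in every round; without re-entry, the active players in round $t+1$ are those who bid in round $t$, and $n_t$ is the number of active players in round $t$. Players do not discount and their payoff is their final wealth. *)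

theory Defs
  imports "HOL-Probability.Probability"
begin

(* Players are 0,...,n-1.  A history is the list of bidder sets of all stages
   played so far, MOST RECENT FIRST.  Every stage of simultaneous choice
   (including a replayed round) is one entry.  The flag r says whether
   re-entry is allowed. *)

type_synonym hist = "nat set list"

(* behaviour strategy profile: player, history |-> probability of Bid *)
type_synonym profile = "nat \<Rightarrow> hist \<Rightarrow> real"

fun active :: "bool \<Rightarrow> nat \<Rightarrow> hist \<Rightarrow> nat set" where
  "active r n [] = {..<n}"
| "active r n (B # h) = (if r \<or> B = {} then active r n h else B)"

(* nonterminal histories that can arise: bidders are active, and no stage had
   exactly one bidder (that would have ended the game) *)
fun valid_hist :: "bool \<Rightarrow> nat \<Rightarrow> hist \<Rightarrow> bool" where
  "valid_hist r n [] = True"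
| "valid_hist r n (B # h) = (valid_hist r n h \<and> B \<subseteq> active r n h \<and> card B \<noteq> 1)"

(* randomisation: independent uniform draws, one per (stage, player);
   player i bids at stage k after history H iff omega (k,i) < sigma i H *)
definition unif_space :: "(nat \<times> nat \<Rightarrow> real) measure" where
  "unif_space = (\<Pi>\<^sub>M _\<in>(UNIV :: (nat \<times> nat) set). uniform_measure lborel {0..1::real})"

definition stage_bidders :: "bool \<Rightarrow> nat \<Rightarrow> profile \<Rightarrow> hist \<Rightarrow> (nat \<times> nat \<Rightarrow> real) \<Rightarrow> nat \<Rightarrow> nat set" where
  "stage_bidders r n \<sigma> H \<omega> k = {i \<in> active r n H. \<omega> (k, i) < \<sigma> i H}"

fun play_hist :: "bool \<Rightarrow> nat \<Rightarrow> profile \<Rightarrow> hist \<Rightarrow> (nat \<times> nat \<Rightarrow> real) \<Rightarrow> nat \<Rightarrow> hist" where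
  "play_hist r n \<sigma> h0 \<omega> 0 = h0"
| "play_hist r n \<sigma> h0 \<omega> (Suc k) =
     stage_bidders r n \<sigma> (play_hist r n \<sigma> h0 \<omega> k) \<omega> k # play_hist r n \<sigma> h0 \<omega> k"

definition bidders :: "bool \<Rightarrow> nat \<Rightarrow> profile \<Rightarrow> hist \<Rightarrow> (nat \<times> nat \<Rightarrow> real) \<Rightarrow> nat \<Rightarrow> nat set" where
  "bidders r n \<sigma> h0 \<omega> k = stage_bidders r n \<sigma> (play_hist r n \<sigma> h0 \<omega> k) \<omega> k"

definition alive :: "bool \<Rightarrow> nat \<Rightarrow> profile \<Rightarrow> hist \<Rightarrow> (nat \<times> nat \<Rightarrow> real) \<Rightarrow> nat \<Rightarrow> bool" where
  "alive r n \<sigma> h0 \<omega> k = (\<forall>j<k. card (bidders r n \<sigma> h0 \<omega> j) \<noteq> 1)"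

definition wins :: "bool \<Rightarrow> nat \<Rightarrow> profile \<Rightarrow> hist \<Rightarrow> nat \<Rightarrow> (nat \<times> nat \<Rightarrow> real) \<Rightarrow> bool" where
  "wins r n \<sigma> h0 i \<omega> = (\<exists>k. alive r n \<sigma> h0 \<omega> k \<and> bidders r n \<sigma> h0 \<omega> k = {i})"

definition num_bids :: "bool \<Rightarrow> nat \<Rightarrow> profile \<Rightarrow> hist \<Rightarrow> nat \<Rightarrow> (nat \<times> nat \<Rightarrow> real) \<Rightarrow> ennreal" where
  "num_bids r n \<sigma> h0 i \<omega> =
     (\<Sum>k. if alive r n \<sigma> h0 \<omega> k \<and> i \<in> bidders r n \<sigma> h0 \<omega> k then 1 else 0)"

(* Sunk bid costs and initial wealth are constants and irrelevant. *)
definition payoff :: "bool \<Rightarrow> nat \<Rightarrow> real \<Rightarrow> real \<Rightarrow> real \<Rightarrow> profile \<Rightarrow> hist \<Rightarrow> nat \<Rightarrow> ereal" where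
  "payoff r n v s c \<sigma> h0 i =
     ereal ((v - s) * measure unif_space {\<omega> \<in> space unif_space. wins r n \<sigma> h0 i \<omega>})
     - enn2ereal (ennreal c * (\<integral>\<^sup>+ \<omega>. num_bids r n \<sigma> h0 i \<omega> \<partial>unif_space))"

definition is_strategy :: "(hist \<Rightarrow> real) \<Rightarrow> bool" where
  "is_strategy \<tau> = (\<forall>h. 0 \<le> \<tau> h \<and> \<tau> h \<le> 1)"

definition is_profile :: "profile \<Rightarrow> bool" where
  "is_profile \<sigma> = (\<forall>i. is_strategy (\<sigma> i))"

definition is_SPE :: "bool \<Rightarrow> nat \<Rightarrow> real \<Rightarrow> real \<Rightarrow> real \<Rightarrow> profile \<Rightarrow> bool" where
  "is_SPE r n v s c \<sigma> =
     (is_profile \<sigma> \<and>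
      (\<forall>h. valid_hist r n h \<longrightarrow> (\<forall>i \<in> active r n h. \<forall>\<tau>. is_strategy \<tau> \<longrightarrow>
          payoff r n v s c (\<sigma>(i := \<tau>)) h i \<le> payoff r n v s c \<sigma> h i)))"

definition symmetric :: "bool \<Rightarrow> nat \<Rightarrow> profile \<Rightarrow> bool" where
  "symmetric r n \<sigma> =
     (\<forall>h. valid_hist r n h \<longrightarrow> (\<forall>i \<in> active r n h. \<forall>j \<in> active r n h. \<sigma> i h = \<sigma> j h))"

end

theory Submission
  imports Defs
begin

abbreviation U :: "real measure" where "U \<equiv> uniform_measure lborel {0..1::real}"

lemma probU: "prob_space U"
  by (rule prob_space_uniform_measure) auto

lemma space_unif[simp]: "space unif_space = UNIV"
  by (auto simp: unif_space_def space_PiM)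

lemma sets_unif: "sets unif_space = sets (\<Pi>\<^sub>M _\<in>(UNIV :: (nat \<times> nat) set). U)"
  by (simp add: unif_space_def)

lemma prob_unif: "prob_space unif_space"
  unfolding unif_space_def by (intro prob_space_PiM probU)

lemma box_eq: "{\<omega>. \<forall>p\<in>J. \<omega> p \<in> X p} = prod_emb UNIV (\<lambda>_. U) J (Pi\<^sub>E J X)"
  by (auto simp: prod_emb_def space_PiM PiE_iff)

lemma box_sets:
  assumes "finite J" "\<And>p. p \<in> J \<Longrightarrow> X p \<in> sets borel"
  shows "{\<omega>. \<forall>p\<in>J. \<omega> p \<in> X p} \<in> sets unif_space"
  unfolding box_eq unif_space_def
  using assms by (intro sets_PiM_I) auto

lemma box_emeasure:
  assumes "finite J" "\<And>p. p \<in> J \<Longrightarrow> X p \<in> sets borel"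
  shows "emeasure unif_space {\<omega>. \<forall>p\<in>J. \<omega> p \<in> X p} = (\<Prod>p\<in>J. emeasure U (X p))"
  unfolding box_eq unif_space_def
  using assms by (intro emeasure_PiM_emb probU) auto

lemma U_less: assumes "0 \<le> a" "a \<le> 1" shows "emeasure U {x. x < a} = ennreal a"
proof -
  have "{0..1} \<inter> {x. x < a} = {0..<a}" using assms by auto
  then show ?thesis using assms by (simp add: emeasure_uniform_measure divide_ennreal_def)
qed

lemma U_ge: assumes "0 \<le> a" "a \<le> 1" shows "emeasure U {x. \<not> x < a} = ennreal (1 - a)"
proof -
  have "{0..1} \<inter> {x. \<not> x < a} = {a..1}" using assms by auto
  then show ?thesis using assms by (simp add: emeasure_uniform_measure divide_ennreal_def)
qed

definition st :: "bool \<Rightarrow> nat \<Rightarrow> profile \<Rightarrow> hist \<Rightarrow> nat set \<Rightarrow> real" where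
 "st r n \<sigma> H B = (if B \<subseteq> active r n H then (\<Prod>l\<in>active r n H. if l \<in> B then \<sigma> l H else 1 - \<sigma> l H) else 0)"

primrec pr :: "bool \<Rightarrow> nat \<Rightarrow> profile \<Rightarrow> hist \<Rightarrow> hist \<Rightarrow> real" where
 "pr r n \<sigma> h0 [] = 1"
| "pr r n \<sigma> h0 (B#xs) = pr r n \<sigma> h0 xs * st r n \<sigma> (xs@h0) B"

primrec ok :: "bool \<Rightarrow> nat \<Rightarrow> hist \<Rightarrow> hist \<Rightarrow> bool" where
  "ok r n h0 [] = True"
| "ok r n h0 (B#xs) = (ok r n h0 xs \<and> B \<subseteq> active r n (xs@h0))"

primrec Jx :: "bool \<Rightarrow> nat \<Rightarrow> hist \<Rightarrow> hist \<Rightarrow> (nat\<times>nat) set" where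
  "Jx r n h0 [] = {}"
| "Jx r n h0 (B#xs) = Jx r n h0 xs \<union> (\<lambda>l. (length xs, l)) ` active r n (xs@h0)"

primrec Xx :: "bool \<Rightarrow> nat \<Rightarrow> profile \<Rightarrow> hist \<Rightarrow> hist \<Rightarrow> nat\<times>nat \<Rightarrow> real set" where
  "Xx r n \<sigma> h0 [] = (\<lambda>_. UNIV)"
| "Xx r n \<sigma> h0 (B#xs) = (\<lambda>(j,l). if j = length xs then (if l \<in> B then {x. x < \<sigma> l (xs@h0)} else {x. \<not> x < \<sigma> l (xs@h0)}) else Xx r n \<sigma> h0 xs (j,l))"

lemma active_True[simp]: "active True n h = {..<n}"
  by (induction h) auto

lemma active_sub: "ok r n h0 xs \<Longrightarrow> active r n (xs@h0) \<subseteq> active r n h0 \<union> {..<n}"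
  by (induction xs) (auto split: if_splits)

lemma Jx_fst: "p \<in> Jx r n h0 xs \<Longrightarrow> fst p < length xs"
  by (induction xs) auto

lemma Jx_finite: "finite (active r n h0) \<Longrightarrow> ok r n h0 xs \<Longrightarrow> finite (Jx r n h0 xs)"
proof (induction xs)
  case (Cons B xs)
  have o: "ok r n h0 xs" using Cons.prems by simp
  have "finite (active r n h0 \<union> {..<n})" using Cons.prems by simp
  then have "finite (active r n (xs@h0))" using active_sub[OF o] finite_subset by blast
  then show ?case using Cons.IH[OF Cons.prems(1) o] by simp
next
  case Nil
  show ?case by simp
qed

lemma Xx_borel: "p \<in> Jx r n h0 xs \<Longrightarrow> Xx r n \<sigma> h0 xs p \<in> sets borel"
proof (induction xs arbitrary: p)
  case (Cons B xs)
  obtain j l where p: "p = (j,l)" by (cases p)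
  show ?case
  proof (cases "j = length xs")
    case True
    then show ?thesis unfolding p by simp
  next
    case False
    then have "p \<in> Jx r n h0 xs" using Cons.prems p by auto
    then show ?thesis using Cons.IH False p by simp
  qed
next
  case Nil
  then show ?case by simp
qed

lemma stage_bidders_eq:
  "(stage_bidders r n \<sigma> H \<omega> k = B) \<longleftrightarrow> (B \<subseteq> active r n H \<and> (\<forall>l\<in>active r n H. (\<omega> (k,l) < \<sigma> l H) = (l \<in> B)))"
  unfolding stage_bidders_def by auto

lemma play_ok: "play_hist r n \<sigma> h0 \<omega> (length xs) = xs @ h0 \<Longrightarrow> ok r n h0 xs"
proof (induction xs)
  case (Cons B xs)
  have "play_hist r n \<sigma> h0 \<omega> (Suc (length xs)) = B # (xs @ h0)" using Cons.prems by (simp only: length_Cons append_Cons)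
  then have c: "stage_bidders r n \<sigma> (play_hist r n \<sigma> h0 \<omega> (length xs)) \<omega> (length xs) = B
     \<and> play_hist r n \<sigma> h0 \<omega> (length xs) = xs @ h0"
    by (metis play_hist.simps(2) list.inject)
  then have a: "play_hist r n \<sigma> h0 \<omega> (length xs) = xs @ h0" and
    b0: "stage_bidders r n \<sigma> (play_hist r n \<sigma> h0 \<omega> (length xs)) \<omega> (length xs) = B"
    by (rule conjunct2, rule conjunct1)
  have b: "stage_bidders r n \<sigma> (xs @ h0) \<omega> (length xs) = B"
    using b0 unfolding a .
  from b have "B \<subseteq> active r n (xs@h0)" unfolding stage_bidders_def by blast
  with Cons.IH[OF a] show ?case by simp
next
  case Nil
  show ?case by simp
qed

lemma box_play:
  "ok r n h0 xs \<Longrightarrow> {\<omega>. play_hist r n \<sigma> h0 \<omega> (length xs) = xs @ h0} = {\<omega>. \<forall>p\<in>Jx r n h0 xs. \<omega> p \<in> Xx r n \<sigma> h0 xs p}"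
proof (induction xs)
  case (Cons B xs)
  let ?k = "length xs"
  have e1: "(play_hist r n \<sigma> h0 \<omega> (length (B#xs)) = (B#xs) @ h0) \<longleftrightarrow>
     (play_hist r n \<sigma> h0 \<omega> ?k = xs @ h0 \<and> (\<forall>l\<in>active r n (xs@h0). (\<omega> (?k,l) < \<sigma> l (xs@h0)) = (l \<in> B)))" for \<omega>
  proof -
    have "(play_hist r n \<sigma> h0 \<omega> (length (B#xs)) = (B#xs) @ h0) \<longleftrightarrow>
       (stage_bidders r n \<sigma> (play_hist r n \<sigma> h0 \<omega> ?k) \<omega> ?k = B \<and> play_hist r n \<sigma> h0 \<omega> ?k = xs @ h0)"
      unfolding length_Cons append_Cons play_hist.simps list.inject by (rule refl)
    also have "\<dots> \<longleftrightarrow> (play_hist r n \<sigma> h0 \<omega> ?k = xs @ h0 \<and> stage_bidders r n \<sigma> (xs @ h0) \<omega> ?k = B)"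
      by metis
    also have "\<dots> \<longleftrightarrow> (play_hist r n \<sigma> h0 \<omega> ?k = xs @ h0 \<and> (\<forall>l\<in>active r n (xs@h0). (\<omega> (?k,l) < \<sigma> l (xs@h0)) = (l \<in> B)))"
      using Cons.prems unfolding stage_bidders_eq by simp
    finally show ?thesis .
  qed
  have e2: "(\<forall>p\<in>Jx r n h0 (B#xs). \<omega> p \<in> Xx r n \<sigma> h0 (B#xs) p) \<longleftrightarrow>
     ((\<forall>p\<in>Jx r n h0 xs. \<omega> p \<in> Xx r n \<sigma> h0 xs p) \<and> (\<forall>l\<in>active r n (xs@h0). (\<omega> (?k,l) < \<sigma> l (xs@h0)) = (l \<in> B)))" for \<omega>
  proof -
    have eq: "\<forall>p\<in>Jx r n h0 xs. Xx r n \<sigma> h0 (B#xs) p = Xx r n \<sigma> h0 xs p"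
      using Jx_fst by fastforce
    have m: "\<And>l. (\<omega> (?k,l) \<in> Xx r n \<sigma> h0 (B#xs) (?k,l)) = ((\<omega> (?k,l) < \<sigma> l (xs@h0)) = (l \<in> B))"
      by simp
    show ?thesis unfolding Jx.simps ball_Un using eq m by (auto simp del: Xx.simps)
  qed
  have "ok r n h0 xs" using Cons.prems by simp
  with Cons.IH have ih: "\<And>\<omega>. (play_hist r n \<sigma> h0 \<omega> ?k = xs @ h0) = (\<forall>p\<in>Jx r n h0 xs. \<omega> p \<in> Xx r n \<sigma> h0 xs p)"
    by (simp add: set_eq_iff)
  show ?case
  proof (rule Collect_cong)
    fix \<omega>
    show "(play_hist r n \<sigma> h0 \<omega> (length (B # xs)) = (B # xs) @ h0) =
      (\<forall>p\<in>Jx r n h0 (B # xs). \<omega> p \<in> Xx r n \<sigma> h0 (B # xs) p)"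
      apply (subst e1)
      apply (subst e2)
      apply (subst ih)
      apply (rule refl)
      done
  qed
next
  case Nil
  show ?case by simp
qed

lemma st_nonneg: "is_profile \<sigma> \<Longrightarrow> 0 \<le> st r n \<sigma> H B"
  unfolding st_def is_profile_def is_strategy_def
  by (auto intro!: prod_nonneg)

lemma pr_nonneg: "is_profile \<sigma> \<Longrightarrow> 0 \<le> pr r n \<sigma> h0 xs"
  by (induction xs) (auto intro!: mult_nonneg_nonneg st_nonneg)

lemma pr_not_ok: "\<not> ok r n h0 xs \<Longrightarrow> pr r n \<sigma> h0 xs = 0"
  by (induction xs) (auto simp: st_def)

lemma prodJ:
  assumes "finite (active r n h0)" "is_profile \<sigma>"
  shows "ok r n h0 xs \<Longrightarrow> (\<Prod>p\<in>Jx r n h0 xs. emeasure U (Xx r n \<sigma> h0 xs p)) = ennreal (pr r n \<sigma> h0 xs)"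
proof (induction xs)
  case Nil
  then show ?case by simp
next
  case (Cons B ys)
  let ?k = "length ys" and ?A = "active r n (ys@h0)" and ?H = "ys @ h0"
  have o: "ok r n h0 ys" and BA: "B \<subseteq> ?A" using Cons.prems by auto
  have fA: "finite ?A" using active_sub[OF o] assms(1) finite_subset by blast
  have fJ: "finite (Jx r n h0 ys)" using Jx_finite[OF assms(1) o] .
  have disj: "Jx r n h0 ys \<inter> Pair ?k ` ?A = {}" using Jx_fst by fastforce
  have sig: "0 \<le> \<sigma> l ?H" "\<sigma> l ?H \<le> 1" for l
    using assms(2) unfolding is_profile_def is_strategy_def by auto
  have p1: "(\<Prod>p\<in>Jx r n h0 ys. emeasure U (Xx r n \<sigma> h0 (B#ys) p)) = (\<Prod>p\<in>Jx r n h0 ys. emeasure U (Xx r n \<sigma> h0 ys p))"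
  proof (rule prod.cong[OF refl])
    fix p assume "p \<in> Jx r n h0 ys"
    then have "fst p \<noteq> ?k" using Jx_fst by fastforce
    then show "emeasure U (Xx r n \<sigma> h0 (B#ys) p) = emeasure U (Xx r n \<sigma> h0 ys p)"
      by (cases p) simp
  qed
  have p2: "(\<Prod>p\<in>Pair ?k ` ?A. emeasure U (Xx r n \<sigma> h0 (B#ys) p)) = (\<Prod>l\<in>?A. ennreal (if l \<in> B then \<sigma> l ?H else 1 - \<sigma> l ?H))"
  proof -
    have "(\<Prod>p\<in>Pair ?k ` ?A. emeasure U (Xx r n \<sigma> h0 (B#ys) p)) = (\<Prod>l\<in>?A. emeasure U (Xx r n \<sigma> h0 (B#ys) (?k,l)))"
      by (subst prod.reindex) (auto simp: inj_on_def)
    also have "\<dots> = (\<Prod>l\<in>?A. ennreal (if l \<in> B then \<sigma> l ?H else 1 - \<sigma> l ?H))"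
      by (rule prod.cong[OF refl]) (simp del: emeasure_uniform_measure add: U_less[OF sig] U_ge[OF sig])
    finally show ?thesis .
  qed
  have p3: "(\<Prod>l\<in>?A. ennreal (if l \<in> B then \<sigma> l ?H else 1 - \<sigma> l ?H)) = ennreal (st r n \<sigma> ?H B)"
    unfolding st_def using BA sig by (auto intro!: prod_ennreal)
  have "(\<Prod>p\<in>Jx r n h0 (B#ys). emeasure U (Xx r n \<sigma> h0 (B#ys) p)) =
     (\<Prod>p\<in>Jx r n h0 ys. emeasure U (Xx r n \<sigma> h0 (B#ys) p)) * (\<Prod>p\<in>Pair ?k ` ?A. emeasure U (Xx r n \<sigma> h0 (B#ys) p))"
    unfolding Jx.simps using fJ fA disj by (intro prod.union_disjoint) auto
  also have "\<dots> = ennreal (pr r n \<sigma> h0 ys) * ennreal (st r n \<sigma> ?H B)"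
    unfolding p1 p2 p3 Cons.IH[OF o] ..
  also have "\<dots> = ennreal (pr r n \<sigma> h0 (B#ys))"
    using pr_nonneg[OF assms(2)] st_nonneg[OF assms(2)] by (simp add: ennreal_mult)
  finally show ?case .
qed

definition Ev :: "bool \<Rightarrow> nat \<Rightarrow> profile \<Rightarrow> hist \<Rightarrow> hist \<Rightarrow> (nat \<times> nat \<Rightarrow> real) set" where
  "Ev r n \<sigma> h0 xs = {\<omega>. play_hist r n \<sigma> h0 \<omega> (length xs) = xs @ h0}"

lemma Ev_sets_emeasure:
  assumes "finite (active r n h0)" "is_profile \<sigma>"
  shows "Ev r n \<sigma> h0 xs \<in> sets unif_space \<and> emeasure unif_space (Ev r n \<sigma> h0 xs) = ennreal (pr r n \<sigma> h0 xs)"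
proof (cases "ok r n h0 xs")
  case True
  have fJ: "finite (Jx r n h0 xs)" using Jx_finite[OF assms(1) True] .
  have X: "\<And>p. p \<in> Jx r n h0 xs \<Longrightarrow> Xx r n \<sigma> h0 xs p \<in> sets borel" using Xx_borel .
  show ?thesis
    unfolding Ev_def box_play[OF True]
    using box_sets[OF fJ X] box_emeasure[OF fJ X] prodJ[OF assms True] by simp
next
  case False
  then have "Ev r n \<sigma> h0 xs = {}" unfolding Ev_def using play_ok by blast
  then show ?thesis using pr_not_ok[OF False] by simp
qed

definition Sk :: "nat \<Rightarrow> nat \<Rightarrow> hist set" where
  "Sk n k = {xs. length xs = k \<and> (\<forall>B\<in>set xs. B \<subseteq> {..<n} \<and> card B \<noteq> 1)}"

definition Bi :: "nat \<Rightarrow> nat \<Rightarrow> nat set set" where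
  "Bi n i = {B. B \<subseteq> {..<n} \<and> i \<in> B}"

lemma finite_Sk: "finite (Sk n k)"
proof -
  have "Sk n k \<subseteq> {xs. set xs \<subseteq> Pow {..<n} \<and> length xs = k}" unfolding Sk_def by auto
  moreover have "finite {xs. set xs \<subseteq> Pow {..<n} \<and> length xs = k}"
    by (rule finite_lists_length_eq) simp
  ultimately show ?thesis by (rule finite_subset)
qed

lemma finite_Bi: "finite (Bi n i)"
  unfolding Bi_def by (rule finite_subset[of _ "Pow {..<n}"]) auto

primrec pre :: "bool \<Rightarrow> nat \<Rightarrow> profile \<Rightarrow> hist \<Rightarrow> (nat \<times> nat \<Rightarrow> real) \<Rightarrow> nat \<Rightarrow> hist" where
  "pre r n \<sigma> h0 \<omega> 0 = []"
| "pre r n \<sigma> h0 \<omega> (Suc k) = bidders r n \<sigma> h0 \<omega> k # pre r n \<sigma> h0 \<omega> k"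

lemma play_pre: "play_hist r n \<sigma> h0 \<omega> k = pre r n \<sigma> h0 \<omega> k @ h0"
proof (induction k)
  case (Suc k)
  show ?case by (simp add: bidders_def Suc.IH)
qed simp

lemma length_pre[simp]: "length (pre r n \<sigma> h0 \<omega> k) = k"
  by (induction k) auto

lemma set_pre: "set (pre r n \<sigma> h0 \<omega> k) = bidders r n \<sigma> h0 \<omega> ` {..<k}"
  by (induction k) (auto simp: lessThan_Suc)

lemma ok_pre: "ok r n h0 (pre r n \<sigma> h0 \<omega> k)"
  using play_ok[of r n \<sigma> h0 \<omega> "pre r n \<sigma> h0 \<omega> k"] play_pre[of r n \<sigma> h0 \<omega> k] by simp

lemma bidders_sub:
  assumes "active r n h0 \<subseteq> {..<n}"
  shows "bidders r n \<sigma> h0 \<omega> j \<subseteq> {..<n}"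
proof -
  have "bidders r n \<sigma> h0 \<omega> j \<subseteq> active r n (pre r n \<sigma> h0 \<omega> j @ h0)"
    unfolding bidders_def stage_bidders_def play_pre by blast
  also have "\<dots> \<subseteq> {..<n}" using active_sub[OF ok_pre] assms by blast
  finally show ?thesis .
qed

lemma alive_pre:
  assumes "active r n h0 \<subseteq> {..<n}"
  shows "alive r n \<sigma> h0 \<omega> k \<longleftrightarrow> pre r n \<sigma> h0 \<omega> k \<in> Sk n k"
  unfolding alive_def Sk_def using bidders_sub[OF assms] by (auto simp: set_pre)

lemma Ev_pre: "\<omega> \<in> Ev r n \<sigma> h0 xs \<longleftrightarrow> pre r n \<sigma> h0 \<omega> (length xs) = xs"
  unfolding Ev_def play_pre by simp

lemma Ev_pre_Cons: "\<omega> \<in> Ev r n \<sigma> h0 (B # xs) \<longleftrightarrow> bidders r n \<sigma> h0 \<omega> (length xs) = B \<and> pre r n \<sigma> h0 \<omega> (length xs) = xs"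
  unfolding Ev_pre by simp

lemma WinE_eq:
  assumes "active r n h0 \<subseteq> {..<n}"
  shows "{\<omega>. alive r n \<sigma> h0 \<omega> k \<and> bidders r n \<sigma> h0 \<omega> k = {i}} = (\<Union>xs\<in>Sk n k. Ev r n \<sigma> h0 ({i} # xs))"
proof -
  have l: "xs \<in> Sk n k \<Longrightarrow> length xs = k" for xs unfolding Sk_def by simp
  show ?thesis using l unfolding alive_pre[OF assms] by (auto simp: Ev_pre_Cons)
qed

lemma BidE_eq:
  assumes "active r n h0 \<subseteq> {..<n}"
  shows "{\<omega>. alive r n \<sigma> h0 \<omega> k \<and> i \<in> bidders r n \<sigma> h0 \<omega> k} = (\<Union>p\<in>Sk n k \<times> Bi n i. Ev r n \<sigma> h0 (snd p # fst p))"
proof -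
  have l: "xs \<in> Sk n k \<Longrightarrow> length xs = k" for xs unfolding Sk_def by simp
  show ?thesis using l bidders_sub[OF assms] unfolding alive_pre[OF assms] Bi_def
    by (auto simp: Ev_pre_Cons)
qed

definition wk :: "bool \<Rightarrow> nat \<Rightarrow> profile \<Rightarrow> hist \<Rightarrow> nat \<Rightarrow> nat \<Rightarrow> real" where
  "wk r n \<sigma> h0 i k = (\<Sum>xs\<in>Sk n k. pr r n \<sigma> h0 ({i} # xs))"

definition bk :: "bool \<Rightarrow> nat \<Rightarrow> profile \<Rightarrow> hist \<Rightarrow> nat \<Rightarrow> nat \<Rightarrow> real" where
  "bk r n \<sigma> h0 i k = (\<Sum>p\<in>Sk n k \<times> Bi n i. pr r n \<sigma> h0 (snd p # fst p))"

definition WN :: "bool \<Rightarrow> nat \<Rightarrow> profile \<Rightarrow> hist \<Rightarrow> nat \<Rightarrow> ennreal" where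
  "WN r n \<sigma> h0 i = (\<Sum>k. ennreal (wk r n \<sigma> h0 i k))"

definition BD :: "bool \<Rightarrow> nat \<Rightarrow> profile \<Rightarrow> hist \<Rightarrow> nat \<Rightarrow> ennreal" where
  "BD r n \<sigma> h0 i = (\<Sum>k. ennreal (bk r n \<sigma> h0 i k))"

lemma Sk_len: "xs \<in> Sk n k \<Longrightarrow> length xs = k" unfolding Sk_def by simp

context
  fixes r n \<sigma> h0
  assumes A0: "active r n h0 \<subseteq> {..<n}" and prof: "is_profile \<sigma>"
begin

lemma finA0: "finite (active r n h0)" using A0 finite_subset by blast

lemma Ev_sets: "Ev r n \<sigma> h0 xs \<in> sets unif_space"
  using Ev_sets_emeasure[OF finA0 prof] by blast

lemma Ev_em: "emeasure unif_space (Ev r n \<sigma> h0 xs) = ennreal (pr r n \<sigma> h0 xs)"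
  using Ev_sets_emeasure[OF finA0 prof] by blast

lemma WinE_sets: "{\<omega>. alive r n \<sigma> h0 \<omega> k \<and> bidders r n \<sigma> h0 \<omega> k = {i}} \<in> sets unif_space"
  unfolding WinE_eq[OF A0] using finite_Sk Ev_sets by (intro sets.finite_UN) auto

lemma BidE_sets: "{\<omega>. alive r n \<sigma> h0 \<omega> k \<and> i \<in> bidders r n \<sigma> h0 \<omega> k} \<in> sets unif_space"
  unfolding BidE_eq[OF A0] using finite_Sk finite_Bi Ev_sets by (intro sets.finite_UN) auto

lemma WinE_em: "emeasure unif_space {\<omega>. alive r n \<sigma> h0 \<omega> k \<and> bidders r n \<sigma> h0 \<omega> k = {i}} = ennreal (wk r n \<sigma> h0 i k)"
proof -
  have d: "disjoint_family_on (\<lambda>xs. Ev r n \<sigma> h0 ({i} # xs)) (Sk n k)"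
    unfolding disjoint_family_on_def using Sk_len by (auto simp: Ev_pre_Cons)
  have "emeasure unif_space (\<Union>xs\<in>Sk n k. Ev r n \<sigma> h0 ({i} # xs)) = (\<Sum>xs\<in>Sk n k. emeasure unif_space (Ev r n \<sigma> h0 ({i} # xs)))"
    using d finite_Sk Ev_sets by (intro sum_emeasure[symmetric]) auto
  also have "\<dots> = ennreal (wk r n \<sigma> h0 i k)"
    unfolding Ev_em wk_def by (rule sum_ennreal) (rule pr_nonneg[OF prof])
  finally show ?thesis unfolding WinE_eq[OF A0] .
qed

lemma BidE_em: "emeasure unif_space {\<omega>. alive r n \<sigma> h0 \<omega> k \<and> i \<in> bidders r n \<sigma> h0 \<omega> k} = ennreal (bk r n \<sigma> h0 i k)"
proof -
  have d: "disjoint_family_on (\<lambda>p. Ev r n \<sigma> h0 (snd p # fst p)) (Sk n k \<times> Bi n i)"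
    unfolding disjoint_family_on_def using Sk_len by (auto simp: Ev_pre_Cons)
  have "emeasure unif_space (\<Union>p\<in>Sk n k \<times> Bi n i. Ev r n \<sigma> h0 (snd p # fst p)) = (\<Sum>p\<in>Sk n k \<times> Bi n i. emeasure unif_space (Ev r n \<sigma> h0 (snd p # fst p)))"
    using d finite_Sk finite_Bi Ev_sets by (intro sum_emeasure[symmetric]) auto
  also have "\<dots> = ennreal (bk r n \<sigma> h0 i k)"
    unfolding Ev_em bk_def by (rule sum_ennreal) (rule pr_nonneg[OF prof])
  finally show ?thesis unfolding BidE_eq[OF A0] .
qed

lemma wins_em: "emeasure unif_space {\<omega> \<in> space unif_space. wins r n \<sigma> h0 i \<omega>} = WN r n \<sigma> h0 i"
proof -
  let ?W = "\<lambda>k. {\<omega>. alive r n \<sigma> h0 \<omega> k \<and> bidders r n \<sigma> h0 \<omega> k = {i}}"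
  have eq: "{\<omega> \<in> space unif_space. wins r n \<sigma> h0 i \<omega>} = (\<Union>k. ?W k)"
    unfolding wins_def by auto
  have d: "disjoint_family ?W"
    unfolding disjoint_family_on_def
  proof (intro ballI impI)
    fix k k' :: nat assume "k \<in> UNIV" "k' \<in> UNIV" "k \<noteq> k'"
    show "?W k \<inter> ?W k' = {}"
    proof (rule ccontr)
      assume "?W k \<inter> ?W k' \<noteq> {}"
      then obtain \<omega> where a: "\<omega> \<in> ?W k" "\<omega> \<in> ?W k'" by blast
      show False
      proof (cases "k < k'")
        case True
        then show False using a unfolding alive_def by auto
      next
        case False
        then have "k' < k" using \<open>k \<noteq> k'\<close> by simp
        then show False using a unfolding alive_def by auto
      qed
    qed
  qed
  have "emeasure unif_space (\<Union>k. ?W k) = (\<Sum>k. emeasure unif_space (?W k))"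
    using d WinE_sets by (intro suminf_emeasure[symmetric]) auto
  then show ?thesis unfolding eq WN_def WinE_em .
qed

lemma bids_int: "(\<integral>\<^sup>+ \<omega>. num_bids r n \<sigma> h0 i \<omega> \<partial>unif_space) = BD r n \<sigma> h0 i"
proof -
  let ?V = "\<lambda>k. {\<omega>. alive r n \<sigma> h0 \<omega> k \<and> i \<in> bidders r n \<sigma> h0 \<omega> k}"
  have eq: "num_bids r n \<sigma> h0 i \<omega> = (\<Sum>k. indicator (?V k) \<omega>)" for \<omega>
    unfolding num_bids_def by (intro suminf_cong) (simp add: indicator_def)
  have "(\<integral>\<^sup>+ \<omega>. (\<Sum>k. indicator (?V k) \<omega>) \<partial>unif_space) = (\<Sum>k. \<integral>\<^sup>+ \<omega>. indicator (?V k) \<omega> \<partial>unif_space)"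
    using BidE_sets by (intro nn_integral_suminf) auto
  also have "\<dots> = (\<Sum>k. ennreal (bk r n \<sigma> h0 i k))"
    using BidE_sets BidE_em by (simp add: nn_integral_indicator)
  finally show ?thesis unfolding eq BD_def .
qed

lemma payoff_eq: "payoff r n v s c \<sigma> h0 i = ereal ((v - s) * enn2real (WN r n \<sigma> h0 i)) - enn2ereal (ennreal c * BD r n \<sigma> h0 i)"
  unfolding payoff_def bids_int measure_def wins_em ..

lemma WN_le1: "WN r n \<sigma> h0 i \<le> 1"
proof -
  interpret prob_space unif_space by (rule prob_unif)
  show ?thesis unfolding wins_em[symmetric] by (rule emeasure_le_1)
qed

end

definition Cs :: "nat \<Rightarrow> nat set set" where "Cs n = {B. B \<subseteq> {..<n} \<and> card B \<noteq> 1}"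

lemma finite_Cs: "finite (Cs n)"
  unfolding Cs_def by (rule finite_subset[of _ "Pow {..<n}"]) auto

lemma pr_snoc: "pr r n \<sigma> h0 (xs @ [B]) = st r n \<sigma> h0 B * pr r n \<sigma> (B#h0) xs"
  by (induction xs) simp_all

lemma Sk_0: "Sk n 0 = {[]}" unfolding Sk_def by auto

lemma Sk_Suc: "Sk n (Suc k) = (\<lambda>p. fst p @ [snd p]) ` (Sk n k \<times> Cs n)"
proof
  show "Sk n (Suc k) \<subseteq> (\<lambda>p. fst p @ [snd p]) ` (Sk n k \<times> Cs n)"
  proof
    fix xs assume a: "xs \<in> Sk n (Suc k)"
    then have "xs \<noteq> []" unfolding Sk_def by auto
    then obtain ys B where xs: "xs = ys @ [B]" by (cases xs rule: rev_cases) auto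
    then show "xs \<in> (\<lambda>p. fst p @ [snd p]) ` (Sk n k \<times> Cs n)"
      using a unfolding Sk_def Cs_def by (auto intro!: image_eqI[where x="(ys,B)"])
  qed
  show "(\<lambda>p. fst p @ [snd p]) ` (Sk n k \<times> Cs n) \<subseteq> Sk n (Suc k)"
    unfolding Sk_def Cs_def by (auto; blast)
qed

lemma sum_Sk_Suc: "(\<Sum>xs\<in>Sk n (Suc k). F xs) = (\<Sum>B\<in>Cs n. \<Sum>ys\<in>Sk n k. F (ys @ [B]))"
proof -
  have inj: "inj_on (\<lambda>p. fst p @ [snd p]) (Sk n k \<times> Cs n)"
    unfolding inj_on_def by auto
  have "(\<Sum>xs\<in>Sk n (Suc k). F xs) = (\<Sum>p\<in>Sk n k \<times> Cs n. F (fst p @ [snd p]))"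
    unfolding Sk_Suc by (subst sum.reindex[OF inj]) simp
  also have "\<dots> = (\<Sum>ys\<in>Sk n k. \<Sum>B\<in>Cs n. F (ys @ [B]))"
    by (simp only: sum.cartesian_product split_def)
  also have "\<dots> = (\<Sum>B\<in>Cs n. \<Sum>ys\<in>Sk n k. F (ys @ [B]))"
    by (rule sum.swap)
  finally show ?thesis .
qed

lemma pr_snoc2: "pr r n \<sigma> h0 (C # xs @ [B]) = st r n \<sigma> h0 B * pr r n \<sigma> (B#h0) (C#xs)"
  using pr_snoc[of r n \<sigma> h0 "C#xs" B] by simp

lemma bk_alt: "bk r n \<sigma> h0 i k = (\<Sum>xs\<in>Sk n k. \<Sum>C\<in>Bi n i. pr r n \<sigma> h0 (C # xs))"
  unfolding bk_def by (simp only: sum.cartesian_product split_def)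

lemma wk_0: "wk r n \<sigma> h0 i 0 = st r n \<sigma> h0 {i}"
  unfolding wk_def Sk_0 by simp

lemma bk_0: "bk r n \<sigma> h0 i 0 = (\<Sum>B\<in>Bi n i. st r n \<sigma> h0 B)"
  unfolding bk_alt Sk_0 by simp

lemma wk_Suc: "wk r n \<sigma> h0 i (Suc k) = (\<Sum>B\<in>Cs n. st r n \<sigma> h0 B * wk r n \<sigma> (B#h0) i k)"
  unfolding wk_def sum_Sk_Suc by (simp only: pr_snoc2 sum_distrib_left)

lemma bk_Suc: "bk r n \<sigma> h0 i (Suc k) = (\<Sum>B\<in>Cs n. st r n \<sigma> h0 B * bk r n \<sigma> (B#h0) i k)"
proof -
  have "bk r n \<sigma> h0 i (Suc k) = (\<Sum>xs\<in>Sk n (Suc k). \<Sum>C\<in>Bi n i. pr r n \<sigma> h0 (C # xs))"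
    unfolding bk_alt ..
  also have "\<dots> = (\<Sum>B\<in>Cs n. \<Sum>ys\<in>Sk n k. \<Sum>C\<in>Bi n i. pr r n \<sigma> h0 (C # ys @ [B]))"
    by (rule sum_Sk_Suc)
  also have "\<dots> = (\<Sum>B\<in>Cs n. st r n \<sigma> h0 B * (\<Sum>ys\<in>Sk n k. \<Sum>C\<in>Bi n i. pr r n \<sigma> (B#h0) (C # ys)))"
    by (simp only: pr_snoc2 sum_distrib_left)
  also have "\<dots> = (\<Sum>B\<in>Cs n. st r n \<sigma> h0 B * bk r n \<sigma> (B#h0) i k)"
    unfolding bk_alt ..
  finally show ?thesis .
qed

lemma wk_nonneg: "is_profile \<sigma> \<Longrightarrow> 0 \<le> wk r n \<sigma> h0 i k"
  unfolding wk_def by (intro sum_nonneg pr_nonneg)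

lemma bk_nonneg: "is_profile \<sigma> \<Longrightarrow> 0 \<le> bk r n \<sigma> h0 i k"
  unfolding bk_def by (intro sum_nonneg pr_nonneg)

lemma suminf_head: "(\<Sum>k. f k) = f 0 + (\<Sum>k. f (Suc k))" for f :: "nat \<Rightarrow> ennreal"
  using sums_unique[OF sums_Suc[OF summable_sums[OF summableI[of "\<lambda>k. f (Suc k)"]]]] by (simp add: add.commute)

lemma WN_rec:
  assumes "is_profile \<sigma>"
  shows "WN r n \<sigma> h0 i = ennreal (st r n \<sigma> h0 {i}) + (\<Sum>B\<in>Cs n. ennreal (st r n \<sigma> h0 B) * WN r n \<sigma> (B#h0) i)"
proof -
  have "WN r n \<sigma> h0 i = ennreal (wk r n \<sigma> h0 i 0) + (\<Sum>k. ennreal (wk r n \<sigma> h0 i (Suc k)))"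
    unfolding WN_def by (rule suminf_head)
  also have "(\<lambda>k. ennreal (wk r n \<sigma> h0 i (Suc k))) = (\<lambda>k. \<Sum>B\<in>Cs n. ennreal (st r n \<sigma> h0 B) * ennreal (wk r n \<sigma> (B#h0) i k))"
    unfolding wk_Suc using st_nonneg[OF assms] wk_nonneg[OF assms]
    by (auto simp: sum_ennreal[symmetric] ennreal_mult intro!: sum.cong)
  also have "(\<Sum>k. \<Sum>B\<in>Cs n. ennreal (st r n \<sigma> h0 B) * ennreal (wk r n \<sigma> (B#h0) i k)) =
     (\<Sum>B\<in>Cs n. \<Sum>k. ennreal (st r n \<sigma> h0 B) * ennreal (wk r n \<sigma> (B#h0) i k))"
    by (rule suminf_sum) simp
  finally show ?thesis unfolding wk_0 WN_def by simp
qed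

lemma BD_rec:
  assumes "is_profile \<sigma>"
  shows "BD r n \<sigma> h0 i = (\<Sum>B\<in>Bi n i. ennreal (st r n \<sigma> h0 B)) + (\<Sum>B\<in>Cs n. ennreal (st r n \<sigma> h0 B) * BD r n \<sigma> (B#h0) i)"
proof -
  have "BD r n \<sigma> h0 i = ennreal (bk r n \<sigma> h0 i 0) + (\<Sum>k. ennreal (bk r n \<sigma> h0 i (Suc k)))"
    unfolding BD_def by (rule suminf_head)
  also have "(\<lambda>k. ennreal (bk r n \<sigma> h0 i (Suc k))) = (\<lambda>k. \<Sum>B\<in>Cs n. ennreal (st r n \<sigma> h0 B) * ennreal (bk r n \<sigma> (B#h0) i k))"
    unfolding bk_Suc using st_nonneg[OF assms] bk_nonneg[OF assms]
    by (auto simp: sum_ennreal[symmetric] ennreal_mult intro!: sum.cong)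
  also have "(\<Sum>k. \<Sum>B\<in>Cs n. ennreal (st r n \<sigma> h0 B) * ennreal (bk r n \<sigma> (B#h0) i k)) =
     (\<Sum>B\<in>Cs n. \<Sum>k. ennreal (st r n \<sigma> h0 B) * ennreal (bk r n \<sigma> (B#h0) i k))"
    by (rule suminf_sum) simp
  finally show ?thesis unfolding bk_0 BD_def using st_nonneg[OF assms] by (simp add: sum_ennreal)
qed

lemma active_mono: "ok r n h0 xs \<Longrightarrow> active r n (xs@h0) \<subseteq> active r n h0"
  by (induction xs) (auto split: if_splits)

lemma valid_sub: "valid_hist r n h \<Longrightarrow> active r n h \<subseteq> {..<n}"
  by (induction h) (auto split: if_splits)

lemma valid_card: "n \<ge> 2 \<Longrightarrow> valid_hist r n h \<Longrightarrow> 2 \<le> card (active r n h)"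
proof (induction h)
  case Nil then show ?case by simp
next
  case (Cons B h)
  have v: "valid_hist r n h" "B \<subseteq> active r n h" "card B \<noteq> 1" using Cons.prems by auto
  have fB: "finite B" using finite_subset[OF subset_trans[OF v(2) valid_sub[OF v(1)]] finite_lessThan] .
  have ih: "2 \<le> card (active r n h)" using Cons.IH[OF Cons.prems(1) v(1)] .
  show ?case
  proof (cases "r \<or> B = {}")
    case True then show ?thesis using ih by simp
  next
    case False
    then have "0 < card B" using fB card_gt_0_iff by blast
    then have "2 \<le> card B" using v(3) by linarith
    then show ?thesis using False by simp
  qed
qed

lemma pr_inactive: "i \<notin> active r n h0 \<Longrightarrow> i \<in> C \<Longrightarrow> pr r n \<sigma> h0 (C # xs) = 0"
proof (cases "ok r n h0 xs")
  case True
  assume "i \<notin> active r n h0" "i \<in> C"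
  then have "\<not> C \<subseteq> active r n (xs@h0)" using active_mono[OF True] by blast
  then have "st r n \<sigma> (xs@h0) C = 0" unfolding st_def by (simp only: if_False)
  then show ?thesis by (simp only: pr.simps mult_zero_right)
next
  case False
  then show ?thesis by (simp add: pr_not_ok)
qed

lemma inactive_zero:
  assumes "i \<notin> active r n h0"
  shows "WN r n \<sigma> h0 i = 0" "BD r n \<sigma> h0 i = 0"
proof -
  have "wk r n \<sigma> h0 i k = 0" for k unfolding wk_def using pr_inactive[OF assms] by (simp del: pr.simps)
  then show "WN r n \<sigma> h0 i = 0" unfolding WN_def by simp
  have "bk r n \<sigma> h0 i k = 0" for k unfolding bk_alt Bi_def using pr_inactive[OF assms] by (simp del: pr.simps)
  then show "BD r n \<sigma> h0 i = 0" unfolding BD_def by simp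
qed

lemma st_zero: "i \<in> B \<Longrightarrow> \<sigma> i H = 0 \<Longrightarrow> finite (active r n H) \<Longrightarrow> st r n \<sigma> H B = 0"
  unfolding st_def by (auto intro!: prod_zero)

lemma zero_strat:
  assumes "\<And>g. length g \<ge> length h0 \<Longrightarrow> \<sigma> i g = 0" "active r n h0 \<subseteq> {..<n}"
  shows "WN r n \<sigma> h0 i = 0" "BD r n \<sigma> h0 i = 0"
proof -
  have p: "pr r n \<sigma> h0 (C # xs) = 0" if "i \<in> C" for C xs
  proof (cases "ok r n h0 xs")
    case True
    have "finite (active r n (xs@h0))" using finite_subset[OF subset_trans[OF active_mono[OF True] assms(2)] finite_lessThan] .
    moreover have "\<sigma> i (xs@h0) = 0" using assms(1) by simp
    ultimately have "st r n \<sigma> (xs@h0) C = 0" using st_zero[OF that] by blast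
    then show ?thesis by simp
  next
    case False then show ?thesis by (simp add: pr_not_ok)
  qed
  have "wk r n \<sigma> h0 i k = 0" for k unfolding wk_def using p by (simp del: pr.simps)
  then show "WN r n \<sigma> h0 i = 0" unfolding WN_def by simp
  have "bk r n \<sigma> h0 i k = 0" for k unfolding bk_alt Bi_def using p by (simp del: pr.simps)
  then show "BD r n \<sigma> h0 i = 0" unfolding BD_def by simp
qed

lemma st_cong: assumes "\<And>j. \<sigma>' j H = \<sigma> j H" shows "st r n \<sigma>' H B = st r n \<sigma> H B"
  unfolding st_def assms ..

lemma pr_local:
  assumes "\<And>j g. length g \<ge> length h0 \<Longrightarrow> \<sigma>' j g = \<sigma> j g"
  shows "pr r n \<sigma>' h0 xs = pr r n \<sigma> h0 xs"
proof (induction xs)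
  case (Cons B xs)
  have "st r n \<sigma>' (xs@h0) B = st r n \<sigma> (xs@h0) B"
    by (rule st_cong) (rule assms, simp)
  then show ?case using Cons.IH by simp
qed simp

lemma local_WN_BD:
  assumes "\<And>j g. length g \<ge> length h0 \<Longrightarrow> \<sigma>' j g = \<sigma> j g"
  shows "WN r n \<sigma>' h0 i = WN r n \<sigma> h0 i" "BD r n \<sigma>' h0 i = BD r n \<sigma> h0 i"
  unfolding WN_def BD_def wk_def bk_def by (simp_all only: pr_local[OF assms])

lemma prod_if_split:
  assumes "finite A" "X \<subseteq> A"
  shows "(\<Prod>l\<in>A. if l \<in> X then f l else g l) = (\<Prod>l\<in>X. f l) * (\<Prod>l\<in>A - X. g l)"
proof -
  have "A \<inter> {l. l \<in> X} = X" "A \<inter> - {l. l \<in> X} = A - X" using assms by auto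
  then show ?thesis using prod.If_cases[OF assms(1), of "\<lambda>l. l \<in> X" f g] by simp
qed

lemma sum_pow_prod:
  fixes f g :: "nat \<Rightarrow> real"
  assumes "finite A"
  shows "(\<Sum>X\<in>Pow A. \<Prod>l\<in>A. if l \<in> X then f l else g l) = (\<Prod>l\<in>A. f l + g l)"
  unfolding prod_add[OF assms] using prod_if_split[OF assms] by (intro sum.cong) auto

context
  fixes r :: bool and n :: nat and \<sigma> :: profile and H :: hist
  assumes AH: "active r n H \<subseteq> {..<n}"
begin

lemma finAH: "finite (active r n H)" using finite_subset[OF AH finite_lessThan] .

lemma sum_st_pow: "(\<Sum>B\<in>Pow {..<n}. st r n \<sigma> H B) = (\<Sum>B\<in>Pow (active r n H). \<Prod>l\<in>active r n H. if l \<in> B then \<sigma> l H else 1 - \<sigma> l H)"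
proof -
  have "(\<Sum>B\<in>Pow {..<n}. st r n \<sigma> H B) = (\<Sum>B\<in>Pow (active r n H). st r n \<sigma> H B)"
    using AH by (intro sum.mono_neutral_right) (auto simp: st_def)
  then show ?thesis by (simp add: st_def)
qed

lemma sum_st_1: "(\<Sum>B\<in>Pow {..<n}. st r n \<sigma> H B) = 1"
  unfolding sum_st_pow sum_pow_prod[OF finAH] by simp

lemma sum_st_Bi:
  assumes "i \<in> active r n H"
  shows "(\<Sum>B\<in>Bi n i. st r n \<sigma> H B) = \<sigma> i H"
proof -
  let ?A = "active r n H"
  let ?g = "\<lambda>l. if l = i then 0 else 1 - \<sigma> l H"
  have "(\<Sum>B\<in>Bi n i. st r n \<sigma> H B) = (\<Sum>B\<in>Pow {..<n}. if i \<in> B then st r n \<sigma> H B else 0)"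
    unfolding Bi_def by (simp add: sum.inter_filter[symmetric] Int_def Pow_def conj_commute)
  also have "\<dots> = (\<Sum>B\<in>Pow ?A. if i \<in> B then st r n \<sigma> H B else 0)"
    using AH by (intro sum.mono_neutral_right) (auto simp: st_def)
  also have "\<dots> = (\<Sum>B\<in>Pow ?A. \<Prod>l\<in>?A. if l \<in> B then \<sigma> l H else ?g l)"
  proof (rule sum.cong[OF refl])
    fix B assume B: "B \<in> Pow ?A"
    show "(if i \<in> B then st r n \<sigma> H B else 0) = (\<Prod>l\<in>?A. if l \<in> B then \<sigma> l H else ?g l)"
    proof (cases "i \<in> B")
      case True
      then show ?thesis using B unfolding st_def by (auto intro!: prod.cong)
    next
      case False
      then show ?thesis using assms finAH by (auto intro!: prod_zero[symmetric] bexI[of _ i])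
    qed
  qed
  also have "\<dots> = (\<Prod>l\<in>?A. \<sigma> l H + ?g l)"
    by (rule sum_pow_prod[OF finAH])
  also have "\<dots> = \<sigma> i H * (\<Prod>l\<in>?A - {i}. \<sigma> l H + ?g l)"
    using prod.remove[OF finAH assms, of "\<lambda>l. \<sigma> l H + ?g l"] by simp
  also have "(\<Prod>l\<in>?A - {i}. \<sigma> l H + ?g l) = 1"
    by (intro prod.neutral) auto
  finally show ?thesis by simp
qed

lemma st_single:
  assumes "j \<in> active r n H"
  shows "st r n \<sigma> H {j} = \<sigma> j H * (\<Prod>l\<in>active r n H - {j}. 1 - \<sigma> l H)"
proof -
  have "st r n \<sigma> H {j} = (\<Prod>l\<in>active r n H. if l \<in> {j} then \<sigma> l H else 1 - \<sigma> l H)"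
    using assms by (simp add: st_def)
  also have "\<dots> = \<sigma> j H * (\<Prod>l\<in>active r n H - {j}. if l \<in> {j} then \<sigma> l H else 1 - \<sigma> l H)"
    using prod.remove[OF finAH assms, of "\<lambda>l. if l \<in> {j} then \<sigma> l H else 1 - \<sigma> l H"] by simp
  also have "(\<Prod>l\<in>active r n H - {j}. if l \<in> {j} then \<sigma> l H else 1 - \<sigma> l H) = (\<Prod>l\<in>active r n H - {j}. 1 - \<sigma> l H)"
    by (intro prod.cong) auto
  finally show ?thesis .
qed

lemma st_mix:
  assumes "i \<in> active r n H"
  shows "st r n \<sigma> H B = \<sigma> i H * st r n (\<sigma>(i := (\<sigma> i)(H := 1))) H B + (1 - \<sigma> i H) * st r n (\<sigma>(i := (\<sigma> i)(H := 0))) H B"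
proof (cases "B \<subseteq> active r n H")
  case True
  let ?A = "active r n H"
  let ?P = "\<lambda>\<tau>::profile. (\<Prod>l\<in>?A - {i}. if l \<in> B then \<tau> l H else 1 - \<tau> l H)"
  have rm: "st r n \<tau> H B = (if i \<in> B then \<tau> i H else 1 - \<tau> i H) * ?P \<tau>" for \<tau>
    using True prod.remove[OF finAH assms, of "\<lambda>l. if l \<in> B then \<tau> l H else 1 - \<tau> l H"] by (simp add: st_def)
  have P1: "?P (\<sigma>(i := (\<sigma> i)(H := 1))) = ?P \<sigma>" "?P (\<sigma>(i := (\<sigma> i)(H := 0))) = ?P \<sigma>"
    by (intro prod.cong refl; simp)+
  show ?thesis unfolding rm P1 by (simp add: algebra_simps)
qed (simp add: st_def)

end

lemma valid_Cons: "valid_hist r n (B # h) \<longleftrightarrow> valid_hist r n h \<and> B \<subseteq> active r n h \<and> card B \<noteq> 1"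
  by simp

lemma wins_disj: "wins r n \<sigma> h0 i \<omega> \<Longrightarrow> wins r n \<sigma> h0 j \<omega> \<Longrightarrow> i = j"
proof -
  assume "wins r n \<sigma> h0 i \<omega>" "wins r n \<sigma> h0 j \<omega>"
  then obtain k k' where a: "alive r n \<sigma> h0 \<omega> k" "bidders r n \<sigma> h0 \<omega> k = {i}"
    "alive r n \<sigma> h0 \<omega> k'" "bidders r n \<sigma> h0 \<omega> k' = {j}" unfolding wins_def by blast
  have "k = k'"
  proof (rule ccontr)
    assume "k \<noteq> k'"
    then have "k < k' \<or> k' < k" by arith
    then show False using a unfolding alive_def by auto
  qed
  then show "i = j" using a by simp
qed

lemma sum_WN_le1:
  assumes A0: "active r n h0 \<subseteq> {..<n}" and prof: "is_profile \<sigma>" and fin: "finite I"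
  shows "(\<Sum>i\<in>I. WN r n \<sigma> h0 i) \<le> 1"
proof -
  interpret prob_space unif_space by (rule prob_unif)
  let ?E = "\<lambda>i. {\<omega> \<in> space unif_space. wins r n \<sigma> h0 i \<omega>}"
  have sets: "?E i \<in> sets unif_space" for i
  proof -
    have "?E i = (\<Union>k. {\<omega>. alive r n \<sigma> h0 \<omega> k \<and> bidders r n \<sigma> h0 \<omega> k = {i}})"
      unfolding wins_def by auto
    then show ?thesis using WinE_sets[OF A0 prof] by auto
  qed
  have d: "disjoint_family_on ?E I"
    unfolding disjoint_family_on_def using wins_disj by blast
  have "(\<Sum>i\<in>I. WN r n \<sigma> h0 i) = (\<Sum>i\<in>I. emeasure unif_space (?E i))"
    using wins_em[OF A0 prof] by simp
  also have "\<dots> = emeasure unif_space (\<Union>i\<in>I. ?E i)"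
    using sets d fin by (intro sum_emeasure) auto
  also have "\<dots> \<le> 1" by (rule emeasure_le_1)
  finally show ?thesis .
qed

lemma WN_le_BD:
  assumes "i < n" "is_profile \<sigma>"
  shows "WN r n \<sigma> h0 i \<le> BD r n \<sigma> h0 i"
  unfolding WN_def BD_def
proof (intro suminf_le ennreal_leI)
  fix k
  show "wk r n \<sigma> h0 i k \<le> bk r n \<sigma> h0 i k"
    unfolding wk_def bk_alt
  proof (intro sum_mono)
    fix xs
    have "{i} \<in> Bi n i" using assms(1) unfolding Bi_def by auto
    then show "pr r n \<sigma> h0 ({i} # xs) \<le> (\<Sum>C\<in>Bi n i. pr r n \<sigma> h0 (C # xs))"
      by (rule member_le_sum) (simp_all del: pr.simps add: pr_nonneg[OF assms(2)] finite_Bi)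
  qed
qed auto

definition Wv :: "bool \<Rightarrow> nat \<Rightarrow> real \<Rightarrow> real \<Rightarrow> real \<Rightarrow> profile \<Rightarrow> hist \<Rightarrow> nat \<Rightarrow> real" where
  "Wv r n v s c \<sigma> h i = (v - s) * enn2real (WN r n \<sigma> h i) - c * enn2real (BD r n \<sigma> h i)"

definition Csa :: "bool \<Rightarrow> nat \<Rightarrow> hist \<Rightarrow> nat set set" where
  "Csa r n H = {B \<in> Cs n. B \<subseteq> active r n H}"

definition Rf :: "bool \<Rightarrow> nat \<Rightarrow> real \<Rightarrow> real \<Rightarrow> real \<Rightarrow> profile \<Rightarrow> profile \<Rightarrow> hist \<Rightarrow> nat \<Rightarrow> real" where
  "Rf r n v s c \<sigma> \<sigma>' H i = (v - s) * st r n \<sigma>' H {i} - c * (\<Sum>B\<in>Bi n i. st r n \<sigma>' H B)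
      + (\<Sum>B\<in>Csa r n H. st r n \<sigma>' H B * Wv r n v s c \<sigma> (B # H) i)"

lemma finite_Csa: "finite (Csa r n H)"
  unfolding Csa_def using finite_Cs by simp

lemma ennreal_sum_fin:
  assumes "finite S" "\<And>B. B \<in> S \<Longrightarrow> X B \<noteq> \<top>" "0 \<le> a" "\<And>B. B \<in> S \<Longrightarrow> 0 \<le> b B"
  shows "ennreal a + (\<Sum>B\<in>S. ennreal (b B) * X B) = ennreal (a + (\<Sum>B\<in>S. b B * enn2real (X B)))"
proof -
  have "(\<Sum>B\<in>S. ennreal (b B) * X B) = (\<Sum>B\<in>S. ennreal (b B * enn2real (X B)))"
  proof (intro sum.cong refl)
    fix B assume B: "B \<in> S"
    have e: "ennreal (enn2real (X B)) = X B" using assms(2)[OF B] by (simp add: ennreal_enn2real less_top[symmetric])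
    show "ennreal (b B) * X B = ennreal (b B * enn2real (X B))"
      using assms(4)[OF B] by (simp add: ennreal_mult e)
  qed
  also have "\<dots> = ennreal (\<Sum>B\<in>S. b B * enn2real (X B))"
    using assms(4) by (intro sum_ennreal) simp
  finally show ?thesis using assms(3,4) by (simp add: ennreal_plus sum_nonneg)
qed

lemma sum_Cs_Csa:
  fixes f :: "nat set \<Rightarrow> ennreal"
  assumes "\<And>B. B \<in> Cs n \<Longrightarrow> \<not> B \<subseteq> active r n H \<Longrightarrow> f B = 0"
  shows "(\<Sum>B\<in>Cs n. f B) = (\<Sum>B\<in>Csa r n H. f B)"
  unfolding Csa_def using assms finite_Cs by (intro sum.mono_neutral_right) auto

locale spe =
  fixes r :: bool and n :: nat and v s c :: real and \<sigma> :: profile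
  assumes n2: "n \<ge> 2" and cpos: "c > 0" and cV: "c < v - s" and SPE: "is_SPE r n v s c \<sigma>"
begin

lemma prof: "is_profile \<sigma>" using SPE unfolding is_SPE_def by simp

lemma dev_zero:
  assumes "valid_hist r n h"
  shows "payoff r n v s c (\<sigma>(i := (\<lambda>g. 0))) h i = 0"
proof -
  have p: "is_profile (\<sigma>(i := (\<lambda>g. 0)))" using prof unfolding is_profile_def is_strategy_def by auto
  have z: "WN r n (\<sigma>(i := (\<lambda>g. 0))) h i = 0" "BD r n (\<sigma>(i := (\<lambda>g. 0))) h i = 0"
    using zero_strat[of h "\<sigma>(i := (\<lambda>g. 0))" i r n] valid_sub[OF assms] by auto
  show ?thesis unfolding payoff_eq[OF valid_sub[OF assms] p] z by (simp add: zero_ennreal.rep_eq zero_ereal_def)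
qed

lemma pay_nonneg:
  assumes "valid_hist r n h" "i \<in> active r n h"
  shows "0 \<le> payoff r n v s c \<sigma> h i"
proof -
  have "is_strategy (\<lambda>g. 0)" unfolding is_strategy_def by simp
  then have "payoff r n v s c (\<sigma>(i := (\<lambda>g. 0))) h i \<le> payoff r n v s c \<sigma> h i"
    using SPE assms unfolding is_SPE_def by blast
  then show ?thesis using dev_zero[OF assms(1)] by simp
qed

lemma BD_fin:
  assumes "valid_hist r n h"
  shows "BD r n \<sigma> h i \<noteq> \<top>"
proof (cases "i \<in> active r n h")
  case True
  show ?thesis
  proof
    assume inf: "BD r n \<sigma> h i = \<top>"
    have "payoff r n v s c \<sigma> h i = ereal ((v - s) * enn2real (WN r n \<sigma> h i)) - enn2ereal (ennreal c * \<top>)"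
      using payoff_eq[OF valid_sub[OF assms] prof] inf by simp
    also have "\<dots> = - \<infinity>" using cpos by (simp add: ennreal_mult_top)
    finally show False using pay_nonneg[OF assms True] by simp
  qed
next
  case False
  then show ?thesis using inactive_zero by simp
qed

lemma WN_fin: assumes "valid_hist r n h" shows "WN r n \<sigma> h i \<noteq> \<top>"
proof -
  have "WN r n \<sigma> h i \<le> 1" using WN_le1[OF valid_sub[OF assms] prof] .
  then have "WN r n \<sigma> h i < \<top>" using ennreal_one_less_top by (rule le_less_trans)
  then show ?thesis by simp
qed

lemma payoff_Wv:
  assumes "valid_hist r n h"
  shows "payoff r n v s c \<sigma> h i = ereal (Wv r n v s c \<sigma> h i)"
proof -
  have "enn2ereal (ennreal c * BD r n \<sigma> h i) = ereal (c * enn2real (BD r n \<sigma> h i))"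
  proof -
    have e: "BD r n \<sigma> h i = ennreal (enn2real (BD r n \<sigma> h i))" using BD_fin[OF assms] by (simp add: ennreal_enn2real less_top[symmetric])
    have "ennreal c * BD r n \<sigma> h i = ennreal (c * enn2real (BD r n \<sigma> h i))"
      using cpos by (subst e) (simp add: ennreal_mult)
    then show ?thesis using cpos by simp
  qed
  then show ?thesis unfolding payoff_eq[OF valid_sub[OF assms] prof] Wv_def by simp
qed

lemma Wv_nonneg:
  assumes "valid_hist r n h"
  shows "0 \<le> Wv r n v s c \<sigma> h i"
proof (cases "i \<in> active r n h")
  case True
  then show ?thesis using pay_nonneg[OF assms True] payoff_Wv[OF assms] by simp
next
  case False
  then show ?thesis unfolding Wv_def using inactive_zero by simp
qed

lemma Wv_le_WN:
  assumes "valid_hist r n h" "i \<in> active r n h"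
  shows "Wv r n v s c \<sigma> h i \<le> (v - s - c) * enn2real (WN r n \<sigma> h i)"
proof -
  have "i < n" using valid_sub[OF assms(1)] assms(2) by auto
  then have "enn2real (WN r n \<sigma> h i) \<le> enn2real (BD r n \<sigma> h i)"
    using WN_le_BD[OF _ prof] BD_fin[OF assms(1)] by (intro enn2real_mono) (auto simp: less_top)
  then show ?thesis unfolding Wv_def using cpos by (simp add: algebra_simps)
qed

lemma WN_le_1: assumes "valid_hist r n h" shows "enn2real (WN r n \<sigma> h i) \<le> 1"
proof -
  have "enn2real (WN r n \<sigma> h i) \<le> enn2real 1"
    using WN_le1[OF valid_sub[OF assms] prof] by (rule enn2real_mono) simp
  then show ?thesis by simp
qed

lemma Wv_le_M:
  assumes "valid_hist r n h"
  shows "Wv r n v s c \<sigma> h i \<le> v - s - c"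
proof (cases "i \<in> active r n h")
  case True
  have "(v - s - c) * enn2real (WN r n \<sigma> h i) \<le> (v - s - c) * 1"
    using WN_le_1[OF assms] cV by (intro mult_left_mono) auto
  then show ?thesis using Wv_le_WN[OF assms True] by simp
next
  case False
  then show ?thesis unfolding Wv_def using inactive_zero cV by simp
qed

lemma sum_Wv:
  assumes "valid_hist r n h"
  shows "(\<Sum>i\<in>active r n h. Wv r n v s c \<sigma> h i) \<le> v - s - c"
proof -
  have fin: "finite (active r n h)" using finite_subset[OF valid_sub[OF assms] finite_lessThan] .
  have "(\<Sum>i\<in>active r n h. WN r n \<sigma> h i) \<le> 1" using sum_WN_le1[OF valid_sub[OF assms] prof fin] .
  then have "enn2real (\<Sum>i\<in>active r n h. WN r n \<sigma> h i) \<le> 1"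
    using enn2real_mono[of _ 1] by fastforce
  moreover have "enn2real (\<Sum>i\<in>active r n h. WN r n \<sigma> h i) = (\<Sum>i\<in>active r n h. enn2real (WN r n \<sigma> h i))"
    using WN_fin[OF assms] by (subst enn2real_sum) (auto simp: less_top)
  ultimately have "(\<Sum>i\<in>active r n h. enn2real (WN r n \<sigma> h i)) \<le> 1" by simp
  then have "(\<Sum>i\<in>active r n h. (v - s - c) * enn2real (WN r n \<sigma> h i)) \<le> (v - s - c) * 1"
    using cV by (simp add: sum_distrib_left[symmetric])
  moreover have "(\<Sum>i\<in>active r n h. Wv r n v s c \<sigma> h i) \<le> (\<Sum>i\<in>active r n h. (v - s - c) * enn2real (WN r n \<sigma> h i))"
    using Wv_le_WN[OF assms] by (intro sum_mono) auto
  ultimately show ?thesis by simp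
qed

end

context spe
begin

lemma decomp:
  assumes vH: "valid_hist r n H" and iA: "i \<in> active r n H" and p': "is_profile \<sigma>'"
    and loc: "\<And>j g. length H < length g \<Longrightarrow> \<sigma>' j g = \<sigma> j g"
  shows "payoff r n v s c \<sigma>' H i = ereal (Rf r n v s c \<sigma> \<sigma>' H i)"
proof -
  let ?st = "st r n \<sigma>' H"
  have A0: "active r n H \<subseteq> {..<n}" using valid_sub[OF vH] .
  have locB: "WN r n \<sigma>' (B#H) i = WN r n \<sigma> (B#H) i" "BD r n \<sigma>' (B#H) i = BD r n \<sigma> (B#H) i" for B
    using local_WN_BD[of "B#H" \<sigma>' \<sigma>] loc by auto
  have z: "\<And>B. B \<in> Cs n \<Longrightarrow> \<not> B \<subseteq> active r n H \<Longrightarrow> ?st B = 0" unfolding st_def by simp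
  have vB: "B \<in> Csa r n H \<Longrightarrow> valid_hist r n (B#H)" for B unfolding Csa_def Cs_def using vH by simp
  have stn: "0 \<le> ?st B" for B using st_nonneg[OF p'] .
  have W1: "WN r n \<sigma>' H i = ennreal (?st {i}) + (\<Sum>B\<in>Csa r n H. ennreal (?st B) * WN r n \<sigma> (B#H) i)"
  proof -
    have e: "(\<Sum>B\<in>Cs n. ennreal (?st B) * WN r n \<sigma> (B#H) i) = (\<Sum>B\<in>Csa r n H. ennreal (?st B) * WN r n \<sigma> (B#H) i)"
      by (rule sum_Cs_Csa) (simp add: z)
    show ?thesis unfolding WN_rec[OF p', of r n H i] locB e ..
  qed
  also have "\<dots> = ennreal (?st {i} + (\<Sum>B\<in>Csa r n H. ?st B * enn2real (WN r n \<sigma> (B#H) i)))"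
    using WN_fin[OF vB] stn by (intro ennreal_sum_fin finite_Csa) auto
  finally have W2: "WN r n \<sigma>' H i = ennreal (?st {i} + (\<Sum>B\<in>Csa r n H. ?st B * enn2real (WN r n \<sigma> (B#H) i)))" .
  have B1: "BD r n \<sigma>' H i = ennreal (\<Sum>B\<in>Bi n i. ?st B) + (\<Sum>B\<in>Csa r n H. ennreal (?st B) * BD r n \<sigma> (B#H) i)"
  proof -
    have e: "(\<Sum>B\<in>Cs n. ennreal (?st B) * BD r n \<sigma> (B#H) i) = (\<Sum>B\<in>Csa r n H. ennreal (?st B) * BD r n \<sigma> (B#H) i)"
      by (rule sum_Cs_Csa) (simp add: z)
    have e2: "(\<Sum>B\<in>Bi n i. ennreal (?st B)) = ennreal (\<Sum>B\<in>Bi n i. ?st B)"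
      using stn by (rule sum_ennreal)
    show ?thesis unfolding BD_rec[OF p', of r n H i] locB e e2 ..
  qed
  also have "\<dots> = ennreal ((\<Sum>B\<in>Bi n i. ?st B) + (\<Sum>B\<in>Csa r n H. ?st B * enn2real (BD r n \<sigma> (B#H) i)))"
    using BD_fin[OF vB] stn by (intro ennreal_sum_fin finite_Csa) (auto intro: sum_nonneg)
  finally have B2: "BD r n \<sigma>' H i = ennreal ((\<Sum>B\<in>Bi n i. ?st B) + (\<Sum>B\<in>Csa r n H. ?st B * enn2real (BD r n \<sigma> (B#H) i)))" .
  let ?X = "?st {i} + (\<Sum>B\<in>Csa r n H. ?st B * enn2real (WN r n \<sigma> (B#H) i))"
  let ?Y = "(\<Sum>B\<in>Bi n i. ?st B) + (\<Sum>B\<in>Csa r n H. ?st B * enn2real (BD r n \<sigma> (B#H) i))"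
  have Xn: "0 \<le> ?X" and Yn: "0 \<le> ?Y" using stn by (auto intro!: add_nonneg_nonneg sum_nonneg mult_nonneg_nonneg)
  have "payoff r n v s c \<sigma>' H i = ereal ((v - s) * ?X) - ereal (c * ?Y)"
    unfolding payoff_eq[OF A0 p'] W2 B2 using Xn Yn cpos by (simp add: ennreal_mult[symmetric])
  also have "\<dots> = ereal ((v - s) * ?X - c * ?Y)" by simp
  also have "(v - s) * ?X - c * ?Y = Rf r n v s c \<sigma> \<sigma>' H i"
  proof -
    have "(\<Sum>B\<in>Csa r n H. ?st B * ((v - s) * enn2real (WN r n \<sigma> (B#H) i) - c * enn2real (BD r n \<sigma> (B#H) i)))
      = (v - s) * (\<Sum>B\<in>Csa r n H. ?st B * enn2real (WN r n \<sigma> (B#H) i)) - c * (\<Sum>B\<in>Csa r n H. ?st B * enn2real (BD r n \<sigma> (B#H) i))"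
      by (simp add: sum_subtractf sum_distrib_left right_diff_distrib mult.left_commute)
    then show ?thesis unfolding Rf_def Wv_def by (simp add: ring_distribs)
  qed
  finally show ?thesis .
qed

end

lemma Csa_sum_le:
  fixes f :: "nat set \<Rightarrow> real"
  assumes "\<And>B. 0 \<le> f B" "j < n" "(\<Sum>B\<in>Pow {..<n}. f B) = 1"
  shows "(\<Sum>B\<in>Csa r n H. f B) + f {j} \<le> 1"
proof -
  have nj: "{j} \<notin> Csa r n H" unfolding Csa_def Cs_def by simp
  have sub: "insert {j} (Csa r n H) \<subseteq> Pow {..<n}" using assms(2) unfolding Csa_def Cs_def by auto
  have "(\<Sum>B\<in>Csa r n H. f B) + f {j} = (\<Sum>B\<in>insert {j} (Csa r n H). f B)"
    using nj finite_Csa by simp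
  also have "\<dots> \<le> (\<Sum>B\<in>Pow {..<n}. f B)"
    using sub assms(1) by (intro sum_mono2) auto
  finally show ?thesis using assms(3) by simp
qed

lemma mix_le1:
  fixes W R1 R0 p :: real
  assumes "W = p * R1 + (1 - p) * R0" "(1 - p) * R0 \<le> (1 - p) * W"
  shows "p * W \<le> p * R1"
proof -
  have "p * W = W - (1 - p) * W" by (simp add: algebra_simps)
  also have "\<dots> \<le> W - (1 - p) * R0" using assms(2) by linarith
  also have "\<dots> = p * R1" using assms(1) by linarith
  finally show ?thesis .
qed

lemma mix_le0:
  fixes W R1 R0 p :: real
  assumes "W = p * R1 + (1 - p) * R0" "p * R1 \<le> p * W"
  shows "(1 - p) * W \<le> (1 - p) * R0"
proof -
  have "(1 - p) * W = W - p * W" by (simp add: algebra_simps)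
  also have "\<dots> \<le> W - p * R1" using assms(2) by linarith
  also have "\<dots> = (1 - p) * R0" using assms(1) by linarith
  finally show ?thesis .
qed

lemma lin2: "(\<Sum>B\<in>S. p * f B + (1 - p) * g B) = p * sum f S + (1 - p) * sum g S" for p :: real
  by (simp add: sum.distrib sum_distrib_left)

lemma lin3: "(\<Sum>B\<in>S. (p * f B + (1 - p) * g B) * w B) = p * (\<Sum>B\<in>S. f B * w B) + (1 - p) * (\<Sum>B\<in>S. g B * w B)" for p :: real
  by (simp add: sum.distrib sum_distrib_left ring_distribs mult.assoc)

lemma lin_id:
  fixes V c p a1 a0 S1 S0 T1 T0 :: real
  shows "V * (p * a1 + (1 - p) * a0) - c * (p * S1 + (1 - p) * S0) + (p * T1 + (1 - p) * T0)
    = p * (V * a1 - c * S1 + T1) + (1 - p) * (V * a0 - c * S0 + T0)"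
  by (simp add: algebra_simps)

locale spe_sym = spe +
  assumes sym: "symmetric r n \<sigma>"
begin

definition Sv :: real where
  "Sv = Sup {Wv r n v s c \<sigma> h i | h i. valid_hist r n h \<and> i \<in> active r n h}"

lemma Sv_set_ne: "{Wv r n v s c \<sigma> h i | h i. valid_hist r n h \<and> i \<in> active r n h} \<noteq> {}"
proof -
  have "valid_hist r n []" "0 \<in> active r n []" using n2 by auto
  then show ?thesis by blast
qed

lemma Sv_bdd: "bdd_above {Wv r n v s c \<sigma> h i | h i. valid_hist r n h \<and> i \<in> active r n h}"
  unfolding bdd_above_def using Wv_le_M by blast

lemma Sv_upper: "valid_hist r n h \<Longrightarrow> i \<in> active r n h \<Longrightarrow> Wv r n v s c \<sigma> h i \<le> Sv"
  unfolding Sv_def by (rule cSup_upper[OF _ Sv_bdd]) blast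

lemma Sv_nonneg: "0 \<le> Sv"
proof -
  have "valid_hist r n []" "0 \<in> active r n []" using n2 by auto
  then show ?thesis using Sv_upper Wv_nonneg order_trans by blast
qed

lemma Sv_ge: "valid_hist r n h \<Longrightarrow> Wv r n v s c \<sigma> h i \<le> Sv"
proof (cases "i \<in> active r n h")
  case False
  then have "Wv r n v s c \<sigma> h i = 0" unfolding Wv_def using inactive_zero by simp
  then show "Wv r n v s c \<sigma> h i \<le> Sv" using Sv_nonneg by simp
qed (rule Sv_upper)

lemma Sv_le_M: "Sv \<le> v - s - c"
  unfolding Sv_def using Sv_set_ne Wv_le_M by (intro cSup_least) auto

lemma Sv_approx:
  assumes "0 < e"
  obtains h i where "valid_hist r n h" "i \<in> active r n h" "Sv - e < Wv r n v s c \<sigma> h i"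
proof -
  have "Sv - e < Sv" using assms by simp
  then obtain w where "w \<in> {Wv r n v s c \<sigma> h i | h i. valid_hist r n h \<and> i \<in> active r n h}" "Sv - e < w"
    unfolding Sv_def using less_cSup_iff[OF Sv_set_ne Sv_bdd] by blast
  then show ?thesis using that by blast
qed

context
  fixes H i
  assumes vH: "valid_hist r n H" and iA: "i \<in> active r n H"
begin

abbreviation "A \<equiv> active r n H"
abbreviation "m \<equiv> card (active r n H)"
abbreviation "p \<equiv> \<sigma> i H"
abbreviation "dev q \<equiv> \<sigma>(i := (\<sigma> i)(H := q))"

lemma AH: "A \<subseteq> {..<n}" using valid_sub[OF vH] .
lemma finA: "finite A" using finite_subset[OF AH finite_lessThan] .
lemma m2: "2 \<le> m" using valid_card[OF n2 vH] .
lemma in_n: "i < n" using AH iA by auto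

lemma p01: "0 \<le> p" "p \<le> 1" using prof unfolding is_profile_def is_strategy_def by auto

lemma symp: "j \<in> A \<Longrightarrow> \<sigma> j H = p"
  using sym vH iA unfolding symmetric_def by blast

lemma dev_prof: "0 \<le> q \<Longrightarrow> q \<le> 1 \<Longrightarrow> is_profile (dev q)"
  using prof unfolding is_profile_def is_strategy_def by auto

lemma dev_loc: "length H < length g \<Longrightarrow> dev q j g = \<sigma> j g"
  by auto

lemma W_eq: "Wv r n v s c \<sigma> H i = Rf r n v s c \<sigma> \<sigma> H i"
proof -
  have "payoff r n v s c \<sigma> H i = ereal (Rf r n v s c \<sigma> \<sigma> H i)"
    by (rule decomp[OF vH iA prof]) simp
  then show ?thesis using payoff_Wv[OF vH, of i] by simp
qed

lemma R_le:
  assumes "0 \<le> q" "q \<le> 1"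
  shows "Rf r n v s c \<sigma> (dev q) H i \<le> Wv r n v s c \<sigma> H i"
proof -
  have "is_strategy ((\<sigma> i)(H := q))"
    using prof assms unfolding is_profile_def is_strategy_def by auto
  then have le: "payoff r n v s c (dev q) H i \<le> payoff r n v s c \<sigma> H i"
    using SPE vH iA unfolding is_SPE_def by blast
  have e1: "payoff r n v s c (dev q) H i = ereal (Rf r n v s c \<sigma> (dev q) H i)"
    by (rule decomp[OF vH iA dev_prof[OF assms] dev_loc])
  have e2: "payoff r n v s c \<sigma> H i = ereal (Wv r n v s c \<sigma> H i)" by (rule payoff_Wv[OF vH])
  show ?thesis using le unfolding e1 e2 ereal_less_eq(3) .
qed

lemma mix: "Rf r n v s c \<sigma> \<sigma> H i = p * Rf r n v s c \<sigma> (dev 1) H i + (1 - p) * Rf r n v s c \<sigma> (dev 0) H i"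
proof -
  have e: "st r n \<sigma> H B = p * st r n (dev 1) H B + (1 - p) * st r n (dev 0) H B" for B
    using st_mix[OF AH iA] .
  show ?thesis unfolding Rf_def e lin2 lin3 by (rule lin_id)
qed

lemma prod_rest: "(\<Prod>l\<in>A - {i}. 1 - \<sigma> l H) = (1 - p) ^ (m - 1)"
proof -
  have "(\<Prod>l\<in>A - {i}. 1 - \<sigma> l H) = (\<Prod>l\<in>A - {i}. 1 - p)"
    using symp by (intro prod.cong) auto
  also have "\<dots> = (1 - p) ^ card (A - {i})" by simp
  also have "card (A - {i}) = m - 1" using iA finA by simp
  finally show ?thesis .
qed

lemma st1_i: "st r n (dev 1) H {i} = (1 - p) ^ (m - 1)"
proof -
  have e1: "st r n (dev 1) H {i} = dev 1 i H * (\<Prod>l\<in>A - {i}. 1 - dev 1 l H)"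
    by (rule st_single[OF AH iA])
  have e2: "dev 1 i H = 1" by simp
  have e3: "(\<Prod>l\<in>A - {i}. 1 - dev 1 l H) = (\<Prod>l\<in>A - {i}. 1 - \<sigma> l H)"
    by (intro prod.cong) auto
  show ?thesis unfolding e1 e2 e3 prod_rest by simp
qed

lemma st1_Bi: "(\<Sum>B\<in>Bi n i. st r n (dev 1) H B) = 1"
  using sum_st_Bi[OF AH iA, of "dev 1"] by simp

lemma st0_Bi: "(\<Sum>B\<in>Bi n i. st r n (dev 0) H B) = 0"
  using sum_st_Bi[OF AH iA, of "dev 0"] by simp

lemma st0_i: "st r n (dev 0) H {i} = 0"
  using st_single[OF AH iA, of "dev 0"] by simp

lemma st0_j:
  assumes "j \<in> A" "j \<noteq> i"
  shows "st r n (dev 0) H {j} = p * (1 - p) ^ (m - 2)"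
proof -
  have e1: "st r n (dev 0) H {j} = dev 0 j H * (\<Prod>l\<in>A - {j}. 1 - dev 0 l H)"
    by (rule st_single[OF AH assms(1)])
  have e2: "dev 0 j H = p" using symp[OF assms(1)] assms(2) by simp
  have e3: "(\<Prod>l\<in>A - {j}. 1 - dev 0 l H) = (1 - dev 0 i H) * (\<Prod>l\<in>A - {j} - {i}. 1 - dev 0 l H)"
    using iA assms finA by (intro prod.remove) auto
  have e4: "dev 0 i H = 0" by simp
  have e5: "(\<Prod>l\<in>A - {j} - {i}. 1 - dev 0 l H) = (\<Prod>l\<in>A - {j} - {i}. 1 - p)"
    using symp by (intro prod.cong) auto
  have e6: "(\<Prod>l\<in>A - {j} - {i}. 1 - p) = (1 - p) ^ (m - 2)"
  proof -
    have "card (A - {j} - {i}) = m - 2" using iA assms finA by (simp add: card_Diff_singleton_if)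
    then show ?thesis by simp
  qed
  show ?thesis unfolding e1 e2 e3 e4 e5 e6 by simp
qed

lemma valid_B: "B \<in> Csa r n H \<Longrightarrow> valid_hist r n (B # H)"
  using vH unfolding Csa_def Cs_def by simp

lemma R1_ge: "(v - s) * (1 - p) ^ (m - 1) - c \<le> Rf r n v s c \<sigma> (dev 1) H i"
proof -
  have "0 \<le> (\<Sum>B\<in>Csa r n H. st r n (dev 1) H B * Wv r n v s c \<sigma> (B # H) i)"
    using st_nonneg[OF dev_prof] Wv_nonneg[OF valid_B] by (intro sum_nonneg mult_nonneg_nonneg) auto
  then show ?thesis unfolding Rf_def st1_i st1_Bi by simp
qed

lemma R1_le: "Rf r n v s c \<sigma> (dev 1) H i \<le> (v - s) * (1 - p) ^ (m - 1) - c + Sv * (1 - (1 - p) ^ (m - 1))"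
proof -
  have nn: "0 \<le> st r n (dev 1) H B" for B using st_nonneg[OF dev_prof] by simp
  have "(\<Sum>B\<in>Csa r n H. st r n (dev 1) H B * Wv r n v s c \<sigma> (B # H) i) \<le> (\<Sum>B\<in>Csa r n H. st r n (dev 1) H B * Sv)"
    using nn Sv_ge[OF valid_B] by (intro sum_mono mult_left_mono) auto
  also have "\<dots> = Sv * (\<Sum>B\<in>Csa r n H. st r n (dev 1) H B)" by (simp add: sum_distrib_left mult.commute)
  also have "\<dots> \<le> Sv * (1 - (1 - p) ^ (m - 1))"
  proof -
    have "(\<Sum>B\<in>Csa r n H. st r n (dev 1) H B) + st r n (dev 1) H {i} \<le> 1"
      using nn in_n sum_st_1[OF AH] by (intro Csa_sum_le) auto
    then show ?thesis using Sv_nonneg st1_i by (intro mult_left_mono) auto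
  qed
  finally show ?thesis unfolding Rf_def st1_i st1_Bi by simp
qed

lemma R0_le:
  assumes "j \<in> A" "j \<noteq> i"
  shows "Rf r n v s c \<sigma> (dev 0) H i \<le> Sv * (1 - p * (1 - p) ^ (m - 2))"
proof -
  have nn: "0 \<le> st r n (dev 0) H B" for B using st_nonneg[OF dev_prof] by simp
  have "(\<Sum>B\<in>Csa r n H. st r n (dev 0) H B * Wv r n v s c \<sigma> (B # H) i) \<le> (\<Sum>B\<in>Csa r n H. st r n (dev 0) H B * Sv)"
    using nn Sv_ge[OF valid_B] by (intro sum_mono mult_left_mono) auto
  also have "\<dots> = Sv * (\<Sum>B\<in>Csa r n H. st r n (dev 0) H B)" by (simp add: sum_distrib_left mult.commute)
  also have "\<dots> \<le> Sv * (1 - p * (1 - p) ^ (m - 2))"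
  proof -
    have "j < n" using AH assms(1) by auto
    then have "(\<Sum>B\<in>Csa r n H. st r n (dev 0) H B) + st r n (dev 0) H {j} \<le> 1"
      using nn sum_st_1[OF AH] by (intro Csa_sum_le) auto
    then show ?thesis using Sv_nonneg st0_j[OF assms] by (intro mult_left_mono) auto
  qed
  finally show ?thesis unfolding Rf_def st0_i st0_Bi by simp
qed

lemma W_mix: "Wv r n v s c \<sigma> H i = p * Rf r n v s c \<sigma> (dev 1) H i + (1 - p) * Rf r n v s c \<sigma> (dev 0) H i"
  unfolding W_eq by (rule mix)

lemma W_le_R1: "0 < p \<Longrightarrow> Wv r n v s c \<sigma> H i \<le> Rf r n v s c \<sigma> (dev 1) H i"
proof -
  assume pp: "0 < p"
  have le: "(1 - p) * Rf r n v s c \<sigma> (dev 0) H i \<le> (1 - p) * Wv r n v s c \<sigma> H i"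
    using R_le[of 0] p01 by (intro mult_left_mono) auto
  have "p * Wv r n v s c \<sigma> H i \<le> p * Rf r n v s c \<sigma> (dev 1) H i"
    by (rule mix_le1[OF W_mix le])
  then show ?thesis using pp by simp
qed

lemma W_le_R0: "p < 1 \<Longrightarrow> Wv r n v s c \<sigma> H i \<le> Rf r n v s c \<sigma> (dev 0) H i"
proof -
  assume pp: "p < 1"
  have le: "p * Rf r n v s c \<sigma> (dev 1) H i \<le> p * Wv r n v s c \<sigma> H i"
    using R_le[of 1] p01 by (intro mult_left_mono) auto
  have "(1 - p) * Wv r n v s c \<sigma> H i \<le> (1 - p) * Rf r n v s c \<sigma> (dev 0) H i"
    by (rule mix_le0[OF W_mix le])
  then show ?thesis using pp by simp
qed

end

end

context spe_sym
begin

lemma D_bound: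
  assumes vH: "valid_hist r n H" and iA: "i \<in> active r n H"
  shows "(v - s) * (1 - \<sigma> i H) ^ (card (active r n H) - 1) - c \<le> (v - s - c) / 2"
proof -
  let ?A = "active r n H" and ?D = "(v - s) * (1 - \<sigma> i H) ^ (card (active r n H) - 1) - c"
  have each: "?D \<le> Wv r n v s c \<sigma> H j" if jA: "j \<in> ?A" for j
  proof -
    have "\<sigma> j H = \<sigma> i H" using symp[OF vH iA jA] .
    then have "?D = (v - s) * (1 - \<sigma> j H) ^ (card ?A - 1) - c" by simp
    also have "\<dots> \<le> Rf r n v s c \<sigma> (\<sigma>(j := (\<sigma> j)(H := 1))) H j" by (rule R1_ge[OF vH jA])
    also have "\<dots> \<le> Wv r n v s c \<sigma> H j" by (rule R_le[OF vH jA]) auto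
    finally show ?thesis .
  qed
  have "real (card ?A) * ?D = (\<Sum>j\<in>?A. ?D)" by simp
  also have "\<dots> \<le> (\<Sum>j\<in>?A. Wv r n v s c \<sigma> H j)" using each by (intro sum_mono) auto
  also have "\<dots> \<le> v - s - c" by (rule sum_Wv[OF vH])
  finally have le: "real (card ?A) * ?D \<le> v - s - c" .
  have m2': "2 \<le> real (card ?A)" using m2[OF vH iA] by simp
  show ?thesis
  proof (cases "0 \<le> ?D")
    case True
    then have "2 * ?D \<le> real (card ?A) * ?D" using m2' by (intro mult_right_mono) auto
    then show ?thesis using le by simp
  next
    case False
    then show ?thesis using cV by simp
  qed
qed

lemma Sv_zero: "Sv = 0"
proof (rule ccontr)
  assume "Sv \<noteq> 0"
  then have Spos: "0 < Sv" using Sv_nonneg by simp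
  define V where "V = v - s"
  define M where "M = V - c"
  define \<beta> where "\<beta> = (c + M / 2) / V"
  define \<delta> where "\<delta> = (1 - \<beta>) / real n * (c / (2 * V))"
  define e where "e = min (c / 2) (Sv * \<delta>)"
  have Vpos: "0 < V" and Mpos: "0 < M" using cV cpos unfolding V_def M_def by auto
  have b1: "\<beta> < 1" unfolding \<beta>_def using Vpos Mpos unfolding M_def by (simp add: field_simps)
  have npos: "0 < real n" using n2 by simp
  have dpos: "0 < \<delta>" unfolding \<delta>_def using b1 npos cpos Vpos by (intro mult_pos_pos divide_pos_pos) auto
  have epos: "0 < e" unfolding e_def using cpos Spos dpos by simp
  obtain H i where vH: "valid_hist r n H" and iA: "i \<in> active r n H" and close: "Sv - e < Wv r n v s c \<sigma> H i"
    using Sv_approx[OF epos] by blast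
  let ?p = "\<sigma> i H" and ?m = "card (active r n H)"
  let ?Aa = "(1 - ?p) ^ (?m - 1)"
  let ?W = "Wv r n v s c \<sigma> H i"
  have p0: "0 \<le> ?p" and p1: "?p \<le> 1" using p01[OF vH iA] by auto
  have mm: "2 \<le> ?m" using m2[OF vH iA] .
  have Db: "V * ?Aa - c \<le> M / 2" using D_bound[OF vH iA] unfolding V_def M_def by simp
  have ec: "e \<le> c / 2" and eS: "e \<le> Sv * \<delta>" unfolding e_def by auto
  consider (one) "?p = 1" | (zero) "?p = 0" | (mid) "0 < ?p" "?p < 1" using p0 p1 by linarith
  then show False
  proof cases
    case one
    have A0: "?Aa = 0" using one mm by simp
    have "?W \<le> Rf r n v s c \<sigma> (\<sigma>(i := (\<sigma> i)(H := 1))) H i" using W_le_R1[OF vH iA] one by simp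
    also have "\<dots> \<le> V * ?Aa - c + Sv * (1 - ?Aa)" using R1_le[OF vH iA] unfolding V_def by simp
    finally have "?W \<le> V * ?Aa - c + Sv * (1 - ?Aa)" .
    then have "?W \<le> Sv - c" unfolding A0 by simp
    then show False using close ec cpos by simp
  next
    case zero
    have "?Aa = 1" using zero by simp
    then have "V - c \<le> M / 2" using Db by simp
    then show False using Mpos unfolding M_def by simp
  next
    case mid
    have Aa0: "0 \<le> ?Aa" using p1 by simp
    have "?W \<le> Rf r n v s c \<sigma> (\<sigma>(i := (\<sigma> i)(H := 1))) H i" using W_le_R1[OF vH iA] mid by simp
    also have "\<dots> \<le> V * ?Aa - c + Sv * (1 - ?Aa)" using R1_le[OF vH iA] unfolding V_def by simp
    finally have "Sv - e < V * ?Aa - c + Sv - Sv * ?Aa" using close by (simp add: algebra_simps)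
    moreover have "0 \<le> Sv * ?Aa" using Sv_nonneg Aa0 by simp
    ultimately have "c - e < V * ?Aa" by linarith
    then have "c / 2 < V * ?Aa" using ec by linarith
    then have Alow: "c / (2 * V) < ?Aa" using Vpos by (simp add: field_simps)
    have Aup: "?Aa \<le> \<beta>" using Db Vpos unfolding \<beta>_def by (simp add: field_simps)
    have bern: "1 + real (?m - 1) * (- ?p) \<le> ?Aa"
      using Bernoulli_inequality[of "- ?p" "?m - 1"] p1 by simp
    have "real (?m - 1) \<le> real n"
    proof -
      have "?m \<le> card {..<n}" using AH[OF vH iA] by (intro card_mono) auto
      then show ?thesis by simp
    qed
    then have "real (?m - 1) * ?p \<le> real n * ?p" using p0 by (intro mult_right_mono) auto
    then have "1 - \<beta> \<le> real n * ?p" using bern Aup by simp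
    then have plow: "(1 - \<beta>) / real n \<le> ?p" using npos by (simp add: field_simps)
    have pow: "?Aa \<le> (1 - ?p) ^ (?m - 2)"
      using p0 p1 mm by (intro power_decreasing) auto
    have "\<delta> \<le> ?p * ?Aa"
      unfolding \<delta>_def using plow Alow b1 npos cpos Vpos p0
      by (intro mult_mono) (auto intro!: divide_nonneg_pos)
    also have "\<dots> \<le> ?p * (1 - ?p) ^ (?m - 2)" using pow p0 by (intro mult_left_mono)
    finally have dq: "\<delta> \<le> ?p * (1 - ?p) ^ (?m - 2)" .
    obtain j where jA: "j \<in> active r n H" and ji: "j \<noteq> i"
    proof -
      have "card (active r n H - {i}) \<ge> 1" using mm iA finA[OF vH iA] by simp
      then have "active r n H - {i} \<noteq> {}" by (metis card.empty not_one_le_zero)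
      then show ?thesis using that by blast
    qed
    have "?W \<le> Rf r n v s c \<sigma> (\<sigma>(i := (\<sigma> i)(H := 0))) H i" using W_le_R0[OF vH iA] mid by simp
    also have "\<dots> \<le> Sv * (1 - ?p * (1 - ?p) ^ (?m - 2))" by (rule R0_le[OF vH iA jA ji])
    also have "\<dots> \<le> Sv * (1 - \<delta>)" using dq Sv_nonneg by (intro mult_left_mono) auto
    finally have "?W \<le> Sv - Sv * \<delta>" by (simp add: algebra_simps)
    then show False using close eS by simp
  qed
qed

lemma Wv_zero: "valid_hist r n h \<Longrightarrow> Wv r n v s c \<sigma> h j = 0"
  using Sv_ge Wv_nonneg Sv_zero by (metis order_antisym)

lemma formula:
  assumes vH: "valid_hist r n H" and iA: "i \<in> active r n H"
  shows "\<sigma> i H = 1 - (c / (v - s)) powr (1 / (real (card (active r n H)) - 1))"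
proof -
  let ?p = "\<sigma> i H" and ?m = "card (active r n H)"
  let ?Aa = "(1 - ?p) ^ (?m - 1)"
  let ?R1 = "Rf r n v s c \<sigma> (\<sigma>(i := (\<sigma> i)(H := 1))) H i"
  have p0: "0 \<le> ?p" and p1: "?p \<le> 1" using p01[OF vH iA] by auto
  have mm: "2 \<le> ?m" using m2[OF vH iA] .
  have W0: "Wv r n v s c \<sigma> H i = 0" using Wv_zero[OF vH] .
  have R1eq: "?R1 = (v - s) * ?Aa - c"
    using R1_ge[OF vH iA] R1_le[OF vH iA] Sv_zero by simp
  have "?R1 \<le> 0" using R_le[OF vH iA, of 1] W0 by simp
  then have up: "(v - s) * ?Aa \<le> c" using R1eq by simp
  have ppos: "0 < ?p"
  proof (rule ccontr)
    assume "\<not> 0 < ?p"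
    then have "?p = 0" using p0 by simp
    then show False using up cV by simp
  qed
  have "0 \<le> ?R1" using W_le_R1[OF vH iA ppos] W0 by simp
  then have "(v - s) * ?Aa = c" using up R1eq by simp
  then have Aeq: "?Aa = c / (v - s)" using cV cpos by (simp add: field_simps)
  have apos: "0 < 1 - ?p"
  proof -
    have "?Aa \<noteq> 0" using Aeq cpos cV by simp
    then have "1 - ?p \<noteq> 0" using mm by auto
    then show ?thesis using p1 by simp
  qed
  have k: "real (?m - 1) = real ?m - 1" using mm by (simp add: of_nat_diff)
  have kpos: "0 < real (?m - 1)" using mm by simp
  have e1: "(c / (v - s)) powr (1 / (real ?m - 1)) = ?Aa powr (1 / real (?m - 1))"
    unfolding Aeq k ..
  have e2: "?Aa = (1 - ?p) powr real (?m - 1)" by (rule powr_realpow[OF apos, symmetric])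
  have e3: "((1 - ?p) powr real (?m - 1)) powr (1 / real (?m - 1)) = (1 - ?p) powr (real (?m - 1) * (1 / real (?m - 1)))"
    by (rule powr_powr)
  have e4: "real (?m - 1) * (1 / real (?m - 1)) = 1" using kpos by simp
  have "(c / (v - s)) powr (1 / (real ?m - 1)) = 1 - ?p"
    unfolding e1 e2 e3 e4 using apos by simp
  then show ?thesis by simp
qed

end

definition pst :: "real \<Rightarrow> nat \<Rightarrow> real" where
  "pst x m = (if 2 \<le> m then 1 - x powr (1 / (real m - 1)) else 0)"

definition sstat :: "bool \<Rightarrow> nat \<Rightarrow> real \<Rightarrow> profile" where
  "sstat r n x = (\<lambda>i h. pst x (card (active r n h)))"

lemma pst_01:
  assumes "0 < x" "x < 1"
  shows "0 \<le> pst x m" "pst x m \<le> 1"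
proof -
  have "x powr (1 / (real m - 1)) \<le> 1" if "2 \<le> m"
    using that assms by (intro powr_le1) auto
  then show "0 \<le> pst x m" unfolding pst_def by simp
  show "pst x m \<le> 1" unfolding pst_def by simp
qed

lemma pst_pow:
  assumes "0 < x" "2 \<le> m"
  shows "(1 - pst x m) ^ (m - 1) = x"
proof -
  have k: "real (m - 1) = real m - 1" using assms by (simp add: of_nat_diff)
  have kpos: "0 < real (m - 1)" using assms by simp
  let ?y = "x powr (1 / real (m - 1))"
  have ypos: "0 < ?y" using assms by simp
  have "1 - pst x m = ?y" unfolding pst_def k using assms by simp
  then have "(1 - pst x m) ^ (m - 1) = ?y ^ (m - 1)" by simp
  also have "\<dots> = ?y powr real (m - 1)" by (rule powr_realpow[OF ypos, symmetric])
  also have "\<dots> = x powr (1 / real (m - 1) * real (m - 1))" by (rule powr_powr)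
  also have "1 / real (m - 1) * real (m - 1) = 1" using kpos by simp
  finally show ?thesis using assms by simp
qed

lemma valid_app: "valid_hist r n h \<Longrightarrow> ok r n h xs \<Longrightarrow> (\<forall>B\<in>set xs. card B \<noteq> 1) \<Longrightarrow> valid_hist r n (xs @ h)"
  by (induction xs) auto

lemma pr_ok: "pr r n \<sigma> h xs \<noteq> 0 \<Longrightarrow> ok r n h xs"
  using pr_not_ok by blast

context
  fixes r :: bool and n :: nat and v s c :: real and i :: nat and \<tau> :: "hist \<Rightarrow> real" and h :: hist
  assumes n2: "n \<ge> 2" and cpos: "c > 0" and cV: "c < v - s" and tau: "is_strategy \<tau>" and vh: "valid_hist r n h"
begin

abbreviation "xv \<equiv> c / (v - s)"
abbreviation "sd \<equiv> (sstat r n xv)(i := \<tau>)"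

lemma x01: "0 < xv" "xv < 1" using cpos cV by auto

lemma prof': "is_profile sd"
  using pst_01[OF x01] tau unfolding is_profile_def is_strategy_def sstat_def by auto

lemma stage_eq:
  assumes H: "valid_hist r n H"
  shows "c * (\<Sum>C\<in>Bi n i. st r n sd H C) = (v - s) * st r n sd H {i}"
proof (cases "i \<in> active r n H")
  case False
  have "st r n sd H C = 0" if "C \<in> Bi n i" for C
    using that False unfolding st_def Bi_def by auto
  moreover have "st r n sd H {i} = 0" using False unfolding st_def by auto
  ultimately show ?thesis by simp
next
  case True
  let ?A = "active r n H" and ?m = "card (active r n H)"
  have AH: "?A \<subseteq> {..<n}" using valid_sub[OF H] .
  have fin: "finite ?A" using finite_subset[OF AH finite_lessThan] .
  have mm: "2 \<le> ?m" using valid_card[OF n2 H] .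
  have s1: "(\<Sum>C\<in>Bi n i. st r n sd H C) = \<tau> H" using sum_st_Bi[OF AH True, of sd] by simp
  have "st r n sd H {i} = sd i H * (\<Prod>l\<in>?A - {i}. 1 - sd l H)" by (rule st_single[OF AH True])
  also have "(\<Prod>l\<in>?A - {i}. 1 - sd l H) = (\<Prod>l\<in>?A - {i}. 1 - pst xv ?m)"
    by (intro prod.cong) (auto simp: sstat_def)
  also have "\<dots> = (1 - pst xv ?m) ^ (?m - 1)" using True fin by simp
  also have "\<dots> = xv" by (rule pst_pow[OF x01(1) mm])
  finally have s2': "st r n sd H {i} = sd i H * xv" .
  have "sd i H = \<tau> H" by simp
  then have s2: "st r n sd H {i} = \<tau> H * xv" using s2' by simp
  have vne: "v - s \<noteq> 0" using cV cpos by simp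
  have "(v - s) * (\<tau> H * xv) = c * \<tau> H" using vne by (simp add: field_simps)
  then show ?thesis unfolding s1 s2 by simp
qed

lemma k_eq: "c * bk r n sd h i k = (v - s) * wk r n sd h i k"
proof -
  have t: "c * (\<Sum>C\<in>Bi n i. pr r n sd h (C # xs)) = (v - s) * pr r n sd h ({i} # xs)"
    if xs: "xs \<in> Sk n k" for xs
  proof (cases "pr r n sd h xs = 0")
    case True
    then show ?thesis by simp
  next
    case False
    have "valid_hist r n (xs @ h)"
      using valid_app[OF vh pr_ok[OF False]] xs unfolding Sk_def by auto
    then have "c * (\<Sum>C\<in>Bi n i. st r n sd (xs @ h) C) = (v - s) * st r n sd (xs @ h) {i}"
      by (rule stage_eq)
    then have "pr r n sd h xs * (c * (\<Sum>C\<in>Bi n i. st r n sd (xs @ h) C)) = pr r n sd h xs * ((v - s) * st r n sd (xs @ h) {i})"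
      by simp
    then show ?thesis by (simp add: sum_distrib_left algebra_simps)
  qed
  have "c * bk r n sd h i k = (\<Sum>xs\<in>Sk n k. c * (\<Sum>C\<in>Bi n i. pr r n sd h (C # xs)))"
    unfolding bk_alt by (rule sum_distrib_left)
  also have "\<dots> = (\<Sum>xs\<in>Sk n k. (v - s) * pr r n sd h ({i} # xs))"
    using t by (rule sum.cong[OF refl])
  also have "\<dots> = (v - s) * wk r n sd h i k"
    unfolding wk_def by (rule sum_distrib_left[symmetric])
  finally show ?thesis .
qed

lemma payoff_zero: "payoff r n v s c sd h i = 0"
proof -
  have A0: "active r n h \<subseteq> {..<n}" using valid_sub[OF vh] .
  have "ennreal c * BD r n sd h i = (\<Sum>k. ennreal c * ennreal (bk r n sd h i k))"
    unfolding BD_def by (rule ennreal_suminf_cmult[symmetric])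
  also have "\<dots> = (\<Sum>k. ennreal (c * bk r n sd h i k))"
    using cpos bk_nonneg[OF prof'] by (intro suminf_cong ennreal_mult[symmetric]) auto
  also have "\<dots> = (\<Sum>k. ennreal ((v - s) * wk r n sd h i k))" unfolding k_eq ..
  also have "\<dots> = (\<Sum>k. ennreal (v - s) * ennreal (wk r n sd h i k))"
    using cV cpos wk_nonneg[OF prof'] by (intro suminf_cong ennreal_mult) auto
  also have "\<dots> = ennreal (v - s) * WN r n sd h i" unfolding WN_def by (rule ennreal_suminf_cmult)
  finally have e: "ennreal c * BD r n sd h i = ennreal (v - s) * WN r n sd h i" .
  have wf: "WN r n sd h i < \<top>"
    using WN_le1[OF A0 prof'] ennreal_one_less_top by (rule le_less_trans)
  have "WN r n sd h i = ennreal (enn2real (WN r n sd h i))" using wf by simp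
  then have "ennreal (v - s) * WN r n sd h i = ennreal ((v - s) * enn2real (WN r n sd h i))"
    using cV by (metis ennreal_mult enn2real_nonneg less_le_not_le order_less_trans cpos)
  moreover have y0: "0 \<le> (v - s) * enn2real (WN r n sd h i)" using cV cpos by simp
  ultimately show ?thesis unfolding payoff_eq[OF A0 prof'] e by (simp add: enn2ereal_ennreal)
qed

end

lemma existence:
  assumes n2: "n \<ge> 2" and cpos: "c > 0" and cV: "c < v - s"
  shows "is_SPE r n v s c (sstat r n (c / (v - s))) \<and> symmetric r n (sstat r n (c / (v - s)))"
proof -
  let ?s = "sstat r n (c / (v - s))"
  have x: "0 < c / (v - s)" "c / (v - s) < 1" using cpos cV by auto
  have sprof: "is_profile ?s" using pst_01[OF x] unfolding is_profile_def is_strategy_def sstat_def by auto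
  have "payoff r n v s c (?s(i := \<tau>)) h i \<le> payoff r n v s c ?s h i"
    if "valid_hist r n h" "is_strategy \<tau>" for h i \<tau>
  proof -
    have "is_strategy (?s i)" using sprof unfolding is_profile_def by simp
    then have "payoff r n v s c (?s(i := ?s i)) h i = 0"
      by (rule payoff_zero[OF n2 cpos cV _ that(1)])
    moreover have "payoff r n v s c (?s(i := \<tau>)) h i = 0"
      by (rule payoff_zero[OF n2 cpos cV that(2) that(1)])
    ultimately show ?thesis by simp
  qed
  then have "is_SPE r n v s c ?s" unfolding is_SPE_def using sprof by blast
  moreover have "symmetric r n ?s" unfolding symmetric_def sstat_def by simp
  ultimately show ?thesis by blast
qed

lemma uniq:
  assumes "n \<ge> 2" "c > 0" "c < v - s" "is_SPE r n v s c \<sigma>" "symmetric r n \<sigma>"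
    "valid_hist r n h" "i \<in> active r n h"
  shows "\<sigma> i h = 1 - (c / (v - s)) powr (1 / (real (card (active r n h)) - 1))"
proof -
  interpret spe_sym r n v s c \<sigma>
    using assms(1-5) by unfold_locales auto
  show ?thesis by (rule formula[OF assms(6,7)])
qed

theorem mainTheorem2:
  fixes n :: nat and v s c :: real
  assumes "n \<ge> 2" and "v > 0" and "c > 0" and "s \<ge> 0" and "c < v - s"
  shows "((\<exists>\<sigma>. is_SPE True n v s c \<sigma> \<and> symmetric True n \<sigma>) \<and>
          (\<forall>\<sigma>. is_SPE True n v s c \<sigma> \<and> symmetric True n \<sigma> \<longrightarrow>
             (\<forall>h. valid_hist True n h \<longrightarrow> (\<forall>i \<in> active True n h.
                \<sigma> i h = 1 - (c / (v - s)) powr (1 / (real n - 1))))))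
       \<and> ((\<exists>\<sigma>. is_SPE False n v s c \<sigma> \<and> symmetric False n \<sigma>) \<and>
          (\<forall>\<sigma>. is_SPE False n v s c \<sigma> \<and> symmetric False n \<sigma> \<longrightarrow>
             (\<forall>h. valid_hist False n h \<longrightarrow> (\<forall>i \<in> active False n h.
                \<sigma> i h = 1 - (c / (v - s)) powr (1 / (real (card (active False n h)) - 1))))))"
proof -
  have ex: "\<exists>\<sigma>. is_SPE r n v s c \<sigma> \<and> symmetric r n \<sigma>" for r
    using existence[OF assms(1) assms(3) assms(5)] by blast
  have u1: "\<forall>\<sigma>. is_SPE True n v s c \<sigma> \<and> symmetric True n \<sigma> \<longrightarrow>
             (\<forall>h. valid_hist True n h \<longrightarrow> (\<forall>i \<in> active True n h.
                \<sigma> i h = 1 - (c / (v - s)) powr (1 / (real n - 1))))"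
  proof (intro allI impI ballI)
    fix \<sigma> h i
    assume a: "is_SPE True n v s c \<sigma> \<and> symmetric True n \<sigma>" "valid_hist True n h" "i \<in> active True n h"
    have "\<sigma> i h = 1 - (c / (v - s)) powr (1 / (real (card (active True n h)) - 1))"
      using uniq[OF assms(1) assms(3) assms(5)] a by blast
    then show "\<sigma> i h = 1 - (c / (v - s)) powr (1 / (real n - 1))" by simp
  qed
  have u2: "\<forall>\<sigma>. is_SPE False n v s c \<sigma> \<and> symmetric False n \<sigma> \<longrightarrow>
             (\<forall>h. valid_hist False n h \<longrightarrow> (\<forall>i \<in> active False n h.
                \<sigma> i h = 1 - (c / (v - s)) powr (1 / (real (card (active False n h)) - 1))))"
    using uniq[OF assms(1) assms(3) assms(5)] by blast
  show ?thesis using ex u1 u2 by blast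
qed

end
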